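(* Let the data $\{Y_{ij}\}$, the true parameters $(\boldsymbol\nu^*,\mathbf B^* )$, the MLE $(\hat{\boldsymbol\nu},\hat{\mathbf B})$, the posterior weights $\hat\gamma_{ik}$, the pseudo-likelihoods $Q_j$, the candidate solutions $\tilde{\boldsymbol\beta}_j^{(m)}$, $m=1,\dots,K$, and the selected level $\tilde m_j$ be as described in the context, with $J$ and $K$ fixed and $N\to\infty$. Suppose that the following assumptions hold: (A1) (root-$N$ consistency of the MLE) $\|\hat{\boldsymbol\nu}-\boldsymbol\nu^*\|=O_p(N^{-1/2})$ and $\|\hat{\mathbf B}-\mathbf B^*\|_F=O_p(N^{-1/2})$, where $\|\cdot\|$ is the Euclidean norm and $\|\cdot\|_F$ the Frobenius norm, and the class labels of the MLE are aligned with the true labels; (A2) (interior) $0<\beta^*_{jk}<1$ and $\nu^*_k>0$ for all $j=1,\dots,J$ and $k=1,\dots,K$; (A3) the EBIC constant $\rho\ge 1$ does not depend on $N$. Then for each item $j=1,\dots,J$, $P(\tilde m_j=m_j^* )\to 1$ as $N\to\infty$, where $m_j^*$ is the number of distinct values among $\beta^*_{j1},\dots,\beta^*_{jK}$. Moreover, writing $\tilde{\boldsymbol\beta}_j^{(\tilde m_j)}=(\tilde\beta_{j1},\dots,\tilde\beta_{jK})^\top$ for the refined estimator of item $j$, as $N\to\infty$: 1. $P(\tilde\beta_{jg}=\tilde\beta_{jh})\to 1$ for all $g,h\in\{1,\dots,K\}$ with $\beta^*_{jg}=\beta^*_{jh}$; 2. $P(\tilde\beta_{jg}\neq\tilde\beta_{jh})\to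 1$ for all $g,h\in\{1,\dots,K\}$ with $\beta^*_{jg}\neq\beta^*_{jh}$.
   Context: Latent class model: $N$ respondents answer $J$ binary items, $Y_{ij}\in\{0,1\}$. Latent classes $\xi_1,\dots,\xi_N\in\{1,\dots,K\}$ are i.i.d. with $P(\xi_i=k)=\nu_k$ ($\nu_k\ge 0$, $\sum_k\nu_k=1$), $P(Y_{ij}=1\mid\xi_i=k)=\beta_{jk}$, and $Y_{i1},\dots,Y_{iJ}$ are conditionally independent given $\xi_i$ (local independence). Write $\boldsymbol\nu=(\nu_1,\dots,\nu_K)^\top$, $\mathbf B=(\beta_{jk})_{J\times K}$, $\boldsymbol\beta_j=(\beta_{j1},\dots,\beta_{jK})^\top$; the data are generated from true values $\boldsymbol\nu^*,\mathbf B^*$ with $K$ known. The marginal log-likelihood is $l(\boldsymbol\nu,\mathbf B)=\sum_{i=1}^N\log\big(\sum_{k=1}^K\nu_k\prod_{j=1}^J\beta_{jk}^{Y_{ij}}(1-\beta_{jk})^{1-Y_{ij}}\big)$ and $(\hat{\boldsymbol\nu},\hat{\mathbf B})$ is its maximizer (the MLE). For a vector $\mathbf v$, $\mathrm{card}(\mathbf v)$ denotes the number of distinct entries. Posterior weights: $\hat\gamma_{ik}=\dfrac{\hat\nu_k\prod_{j}\hat\beta_{jk}^{Y_{ij}}(1-\hat\beta_{jk})^{1-Y_{ij}}}{\sum_{h=1}^K\hat\nu_h\prod_{j}\hat\beta_{jh}^{Y_{ij}}(1-\hat\beta_{jh})^{1-Y_{ij}}}$, $\hat{\mathbf\Gamma}=(\hat\gamma_{ik})_{N\times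 K}$. Item-specific pseudo-likelihood: $Q_j(\boldsymbol\beta_j;\hat{\mathbf\Gamma})=\sum_{i=1}^N\sum_{k=1}^K\hat\gamma_{ik}\big(Y_{ij}\log\beta_{jk}+(1-Y_{ij})\log(1-\beta_{jk})\big)$. For an ordered partition $\mathcal C=(C_1,\dots,C_m)$ of $\{1,\dots,K\}$ into nonempty disjoint blocks, the constrained solution is the maximizer of $Q_j(\cdot;\hat{\mathbf\Gamma})$ over $\boldsymbol\beta_j$ that are constant on each block (the paper writes this as maximization over $\Theta_j(\mathcal C)=\{\boldsymbol\beta_j:\beta_{jk}=\beta_{jk'}\ \forall k,k'\in C_l;\ \beta_{jk}<\beta_{jk'}$ if $k\in C_l,k'\in C_{l'},l<l'\}$); for $k\in C_l$ it equals $\sum_i\sum_{k'\in C_l}\hat\gamma_{ik'}Y_{ij}\big/\sum_i\sum_{k'\in C_l}\hat\gamma_{ik'}$. Stepwise search (for each item $j$): let $\pi_j$ be a permutation with $\hat\beta_{j,\pi_j(1)}<\cdots<\hat\beta_{j,\pi_j(K)}$ (the entries of $\hat{\boldsymbol\beta}_j$ are assumed distinct, which holds with probability tending to one; ties broken arbitrarily otherwise). Set $\tilde{\boldsymbol\beta}_j^{(K)}=\hat{\boldsymbol\beta}_j$ and $\mathcal C_j^{(K)}=(\{\pi_j(1)\},\dots,\{\pi_j(K)\})$. For $s=K,K-1,\dots,2$: given $\mathcal C_j^{(s)}=(C_{j1}^{(s)},\dots,C_{js}^{(s)})$, for $b=1,\dots,s-1$ form $\mathcal C_{jb}^{(s-1)}$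 by merging the adjacent blocks $C_{jb}^{(s)}$ and $C_{j,b+1}^{(s)}$ (keeping the order of the others), and let $\tilde{\boldsymbol\beta}_{jb}^{(s-1)}$ be the constrained solution for $\mathcal C_{jb}^{(s-1)}$; choose $b_j^{(s-1)}=\arg\max_b Q_j(\tilde{\boldsymbol\beta}_{jb}^{(s-1)};\hat{\mathbf\Gamma})$ and set $\tilde{\boldsymbol\beta}_j^{(s-1)}=\tilde{\boldsymbol\beta}_{jb_j^{(s-1)}}^{(s-1)}$, $\mathcal C_j^{(s-1)}=\mathcal C_{jb_j^{(s-1)}}^{(s-1)}$. This yields candidates $\tilde{\boldsymbol\beta}_j^{(1)},\dots,\tilde{\boldsymbol\beta}_j^{(K)}$. Extended BIC: $\mathrm{EBIC}_j(m)=-2Q_j(\tilde{\boldsymbol\beta}_j^{(m)};\hat{\mathbf\Gamma})+m\log N+2m\log\rho$ with a constant $\rho\ge 1$, and $\tilde m_j=\arg\min_{1\le m\le K}\mathrm{EBIC}_j(m)$. The refined estimator for item $j$ is $\tilde{\boldsymbol\beta}_j^{(\tilde m_j)}$. *)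

theory Defs
  imports "HOL-Probability.Probability"
begin

text \<open>Conventions: respondents i = 0..N-1, items j = 0..J-1, classes k = 0..K-1.
  Responses are booleans (True = 1).\<close>

definition cprob :: "real \<Rightarrow> bool \<Rightarrow> real" where
  "cprob b y = (if y then b else 1 - b)"

definition param_space :: "nat \<Rightarrow> nat \<Rightarrow> (nat \<Rightarrow> real) \<Rightarrow> (nat \<Rightarrow> nat \<Rightarrow> real) \<Rightarrow> bool" where
  "param_space J K \<nu> B \<longleftrightarrow> (\<forall>k<K. 0 \<le> \<nu> k) \<and> (\<Sum>k<K. \<nu> k) = 1 \<and>
     (\<forall>j<J. \<forall>k<K. 0 \<le> B j k \<and> B j k \<le> 1)"

definition resp_lik :: "nat \<Rightarrow> nat \<Rightarrow> (nat \<Rightarrow> real) \<Rightarrow> (nat \<Rightarrow> nat \<Rightarrow> real) \<Rightarrow> (nat \<Rightarrow> bool) \<Rightarrow> real" where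
  "resp_lik J K \<nu> B y = (\<Sum>k<K. \<nu> k * (\<Prod>j<J. cprob (B j k) (y j)))"

text \<open>Marginal likelihood exp(l(nu,B)); maximizing it is maximizing l with log 0 = -infinity.\<close>
definition likelihood :: "nat \<Rightarrow> nat \<Rightarrow> nat \<Rightarrow> (nat \<Rightarrow> real) \<Rightarrow> (nat \<Rightarrow> nat \<Rightarrow> real) \<Rightarrow> (nat \<Rightarrow> nat \<Rightarrow> bool) \<Rightarrow> real" where
  "likelihood N J K \<nu> B Yd = (\<Prod>i<N. resp_lik J K \<nu> B (Yd i))"

definition is_MLE :: "nat \<Rightarrow> nat \<Rightarrow> nat \<Rightarrow> (nat \<Rightarrow> real) \<Rightarrow> (nat \<Rightarrow> nat \<Rightarrow> real) \<Rightarrow> (nat \<Rightarrow> nat \<Rightarrow> bool) \<Rightarrow> bool" where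
  "is_MLE N J K \<nu>h Bh Yd \<longleftrightarrow> param_space J K \<nu>h Bh \<and>
     (\<forall>\<nu> B. param_space J K \<nu> B \<longrightarrow> likelihood N J K \<nu> B Yd \<le> likelihood N J K \<nu>h Bh Yd)"

definition post_weight :: "nat \<Rightarrow> nat \<Rightarrow> (nat \<Rightarrow> real) \<Rightarrow> (nat \<Rightarrow> nat \<Rightarrow> real) \<Rightarrow> (nat \<Rightarrow> nat \<Rightarrow> bool) \<Rightarrow> nat \<Rightarrow> nat \<Rightarrow> real" where
  "post_weight J K \<nu> B Yd i k = \<nu> k * (\<Prod>j<J. cprob (B j k) (Yd i j)) / resp_lik J K \<nu> B (Yd i)"

definition Qj :: "nat \<Rightarrow> nat \<Rightarrow> (nat \<Rightarrow> nat \<Rightarrow> real) \<Rightarrow> (nat \<Rightarrow> nat \<Rightarrow> bool) \<Rightarrow> nat \<Rightarrow> (nat \<Rightarrow> real) \<Rightarrow> real" where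
  "Qj N K \<Gamma> Yd j \<beta> = (\<Sum>i<N. \<Sum>k<K. \<Gamma> i k * (if Yd i j then ln (\<beta> k) else ln (1 - \<beta> k)))"

definition block_mean :: "nat \<Rightarrow> (nat \<Rightarrow> nat \<Rightarrow> real) \<Rightarrow> (nat \<Rightarrow> nat \<Rightarrow> bool) \<Rightarrow> nat \<Rightarrow> nat set \<Rightarrow> real" where
  "block_mean N \<Gamma> Yd j C = (\<Sum>i<N. \<Sum>k\<in>C. \<Gamma> i k * (if Yd i j then 1 else 0)) / (\<Sum>i<N. \<Sum>k\<in>C. \<Gamma> i k)"

text \<open>Ordered partitions are lists of blocks.\<close>
definition block_of :: "nat set list \<Rightarrow> nat \<Rightarrow> nat set" where
  "block_of P k = (THE C. C \<in> set P \<and> k \<in> C)"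

definition constr_sol :: "nat \<Rightarrow> (nat \<Rightarrow> nat \<Rightarrow> real) \<Rightarrow> (nat \<Rightarrow> nat \<Rightarrow> bool) \<Rightarrow> nat \<Rightarrow> nat set list \<Rightarrow> nat \<Rightarrow> real" where
  "constr_sol N \<Gamma> Yd j P = (\<lambda>k. block_mean N \<Gamma> Yd j (block_of P k))"

definition merge_adj :: "nat set list \<Rightarrow> nat \<Rightarrow> nat set list" where
  "merge_adj P b = take b P @ [P ! b \<union> P ! Suc b] @ drop (Suc (Suc b)) P"

definition best_merge :: "nat \<Rightarrow> nat \<Rightarrow> (nat \<Rightarrow> nat \<Rightarrow> real) \<Rightarrow> (nat \<Rightarrow> nat \<Rightarrow> bool) \<Rightarrow> nat \<Rightarrow> nat set list \<Rightarrow> nat" where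
  "best_merge N K \<Gamma> Yd j P = (LEAST b. b < length P - 1 \<and>
     (\<forall>b'<length P - 1. Qj N K \<Gamma> Yd j (constr_sol N \<Gamma> Yd j (merge_adj P b'))
                       \<le> Qj N K \<Gamma> Yd j (constr_sol N \<Gamma> Yd j (merge_adj P b))))"

definition merge_step :: "nat \<Rightarrow> nat \<Rightarrow> (nat \<Rightarrow> nat \<Rightarrow> real) \<Rightarrow> (nat \<Rightarrow> nat \<Rightarrow> bool) \<Rightarrow> nat \<Rightarrow> nat set list \<Rightarrow> nat set list" where
  "merge_step N K \<Gamma> Yd j P = merge_adj P (best_merge N K \<Gamma> Yd j P)"

definition init_part :: "nat \<Rightarrow> (nat \<Rightarrow> real) \<Rightarrow> nat set list" where
  "init_part K \<beta>h = map (\<lambda>k. {k}) (sort_key \<beta>h [0..<K])"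

definition part_m :: "nat \<Rightarrow> nat \<Rightarrow> (nat \<Rightarrow> nat \<Rightarrow> real) \<Rightarrow> (nat \<Rightarrow> nat \<Rightarrow> bool) \<Rightarrow> nat \<Rightarrow> (nat \<Rightarrow> real) \<Rightarrow> nat \<Rightarrow> nat set list" where
  "part_m N K \<Gamma> Yd j \<beta>h m = (merge_step N K \<Gamma> Yd j ^^ (K - m)) (init_part K \<beta>h)"

definition candidate :: "nat \<Rightarrow> nat \<Rightarrow> (nat \<Rightarrow> nat \<Rightarrow> real) \<Rightarrow> (nat \<Rightarrow> nat \<Rightarrow> bool) \<Rightarrow> nat \<Rightarrow> (nat \<Rightarrow> real) \<Rightarrow> nat \<Rightarrow> nat \<Rightarrow> real" where
  "candidate N K \<Gamma> Yd j \<beta>h m =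
     (if m = K then \<beta>h else constr_sol N \<Gamma> Yd j (part_m N K \<Gamma> Yd j \<beta>h m))"

definition EBIC :: "nat \<Rightarrow> nat \<Rightarrow> (nat \<Rightarrow> nat \<Rightarrow> real) \<Rightarrow> (nat \<Rightarrow> nat \<Rightarrow> bool) \<Rightarrow> nat \<Rightarrow> (nat \<Rightarrow> real) \<Rightarrow> real \<Rightarrow> nat \<Rightarrow> real" where
  "EBIC N K \<Gamma> Yd j \<beta>h \<rho> m = - 2 * Qj N K \<Gamma> Yd j (candidate N K \<Gamma> Yd j \<beta>h m)
      + real m * ln (real N) + 2 * real m * ln \<rho>"

definition m_sel :: "nat \<Rightarrow> nat \<Rightarrow> (nat \<Rightarrow> nat \<Rightarrow> real) \<Rightarrow> (nat \<Rightarrow> nat \<Rightarrow> bool) \<Rightarrow> nat \<Rightarrow> (nat \<Rightarrow> real) \<Rightarrow> real \<Rightarrow> nat" where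
  "m_sel N K \<Gamma> Yd j \<beta>h \<rho> = (LEAST m. 1 \<le> m \<and> m \<le> K \<and>
     (\<forall>m'. 1 \<le> m' \<and> m' \<le> K \<longrightarrow> EBIC N K \<Gamma> Yd j \<beta>h \<rho> m \<le> EBIC N K \<Gamma> Yd j \<beta>h \<rho> m'))"

definition m_tilde :: "nat \<Rightarrow> nat \<Rightarrow> nat \<Rightarrow> real \<Rightarrow> (nat \<Rightarrow> real) \<Rightarrow> (nat \<Rightarrow> nat \<Rightarrow> real) \<Rightarrow> (nat \<Rightarrow> nat \<Rightarrow> bool) \<Rightarrow> nat \<Rightarrow> nat" where
  "m_tilde N J K \<rho> \<nu>h Bh Yd j = m_sel N K (post_weight J K \<nu>h Bh Yd) Yd j (Bh j) \<rho>"

definition beta_tilde :: "nat \<Rightarrow> nat \<Rightarrow> nat \<Rightarrow> real \<Rightarrow> (nat \<Rightarrow> real) \<Rightarrow> (nat \<Rightarrow> nat \<Rightarrow> real) \<Rightarrow> (nat \<Rightarrow> nat \<Rightarrow> bool) \<Rightarrow> nat \<Rightarrow> nat \<Rightarrow> real" where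
  "beta_tilde N J K \<rho> \<nu>h Bh Yd j =
     candidate N K (post_weight J K \<nu>h Bh Yd) Yd j (Bh j) (m_tilde N J K \<rho> \<nu>h Bh Yd j)"

text \<open>X_N = O_p(1): tight sequence of random variables.\<close>
definition bounded_in_prob :: "'a measure \<Rightarrow> (nat \<Rightarrow> 'a \<Rightarrow> real) \<Rightarrow> bool" where
  "bounded_in_prob M X \<longleftrightarrow> (\<forall>\<epsilon>>0. \<exists>C. eventually (\<lambda>N. measure M {\<omega>\<in>space M. \<bar>X N \<omega>\<bar> > C} < \<epsilon>) sequentially)"

end

theory Submission
  imports Defs "HOL-Real_Asymp.Real_Asymp"
begin

lemma local_max_affine_prod:
  fixes R d :: "nat \<Rightarrow> real"
  assumes R: "\<forall>i<N. R i > 0" and r: "r > 0"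
    and le: "\<forall>t. \<bar>t\<bar> < r \<longrightarrow> (\<Prod>i<N. R i + t * d i) \<le> (\<Prod>i<N. R i)"
  shows "(\<Sum>i<N. d i / R i) = 0"
proof -
  have der: "((\<lambda>u. \<Prod>i\<in>{..<N}. R i + u * d i) has_field_derivative
      ((\<Prod>i\<in>{..<N}. R i + 0 * d i) * (\<Sum>i\<in>{..<N}. d i / (R i + 0 * d i)))) (at 0)"
    by (rule has_field_derivative_prod') (use R in \<open>auto intro!: derivative_eq_intros\<close>)
  have "(\<Prod>i\<in>{..<N}. R i + 0 * d i) * (\<Sum>i\<in>{..<N}. d i / (R i + 0 * d i)) = 0"
    by (rule DERIV_local_max[OF der r]) (use le in auto)
  moreover have "(\<Prod>i\<in>{..<N}. R i) > 0" using R by (auto intro!: prod_pos)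
  ultimately show ?thesis using R by auto
qed

lemma cprob_add: "cprob (b + t) y = cprob b y + t * (if y then 1 else -1)"
  by (simp add: cprob_def)

lemma resp_lik_update_B:
  assumes j: "j < J" and k: "k < K"
  shows "resp_lik J K \<nu> (B(j := (B j)(k := B j k + t))) y
     = resp_lik J K \<nu> B y + t * (\<nu> k * (\<Prod>j'\<in>{..<J}-{j}. cprob (B j' k) (y j')) * (if y j then 1 else -1))"
proof -
  let ?B' = "B(j := (B j)(k := B j k + t))"
  have fin: "finite {..<K}" "finite {..<J}" by auto
  have other: "(\<Sum>k'\<in>{..<K}-{k}. \<nu> k' * (\<Prod>j'<J. cprob (?B' j' k') (y j')))
      = (\<Sum>k'\<in>{..<K}-{k}. \<nu> k' * (\<Prod>j'<J. cprob (B j' k') (y j')))"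
    by (intro sum.cong refl arg_cong2[where f="(*)"] prod.cong) auto
  have rest: "(\<Prod>j'\<in>{..<J}-{j}. cprob (?B' j' k) (y j')) = (\<Prod>j'\<in>{..<J}-{j}. cprob (B j' k) (y j'))"
    by (intro prod.cong) auto
  have p1: "(\<Prod>j'<J. cprob (?B' j' k) (y j')) = cprob (B j k + t) (y j) * (\<Prod>j'\<in>{..<J}-{j}. cprob (B j' k) (y j'))"
    using prod.remove[OF fin(2), of j "\<lambda>j'. cprob (?B' j' k) (y j')"] j rest by simp
  have p2: "(\<Prod>j'<J. cprob (B j' k) (y j')) = cprob (B j k) (y j) * (\<Prod>j'\<in>{..<J}-{j}. cprob (B j' k) (y j'))"
    using prod.remove[OF fin(2), of j "\<lambda>j'. cprob (B j' k) (y j')"] j by simp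
  have "resp_lik J K \<nu> ?B' y = \<nu> k * (\<Prod>j'<J. cprob (?B' j' k) (y j')) + (\<Sum>k'\<in>{..<K}-{k}. \<nu> k' * (\<Prod>j'<J. cprob (?B' j' k') (y j')))"
    unfolding resp_lik_def using sum.remove[OF fin(1), of k] k by simp
  also have "\<dots> = \<nu> k * (\<Prod>j'<J. cprob (B j' k) (y j')) + t * (\<nu> k * (\<Prod>j'\<in>{..<J}-{j}. cprob (B j' k) (y j')) * (if y j then 1 else -1))
       + (\<Sum>k'\<in>{..<K}-{k}. \<nu> k' * (\<Prod>j'<J. cprob (B j' k') (y j')))"
    unfolding other p1 p2 cprob_add by (simp add: algebra_simps)
  also have "\<dots> = resp_lik J K \<nu> B y + t * (\<nu> k * (\<Prod>j'\<in>{..<J}-{j}. cprob (B j' k) (y j')) * (if y j then 1 else -1))"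
    unfolding resp_lik_def using sum.remove[OF fin(1), of k "\<lambda>k'. \<nu> k' * (\<Prod>j'<J. cprob (B j' k') (y j'))"] k by simp
  finally show ?thesis .
qed

lemma resp_lik_update_nu:
  assumes "k < K" "l < K"
  shows "resp_lik J K (\<lambda>k'. \<nu> k' + t * ((if k' = k then 1 else 0) - (if k' = l then 1 else 0))) B y
     = resp_lik J K \<nu> B y + t * ((\<Prod>j<J. cprob (B j k) (y j)) - (\<Prod>j<J. cprob (B j l) (y j)))"
proof -
  let ?F = "\<lambda>k. (\<Prod>j<J. cprob (B j k) (y j))"
  have d: "(\<Sum>k'<K. (if k' = m then 1 else 0) * ?F k') = ?F m" if "m < K" for m
  proof -
    have "(\<Sum>k'<K. (if k' = m then 1 else 0) * ?F k') = (\<Sum>k'<K. if k' = m then ?F k' else 0)"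
      by (intro sum.cong) auto
    also have "\<dots> = ?F m" using that by simp
    finally show ?thesis .
  qed
  have "resp_lik J K (\<lambda>k'. \<nu> k' + t * ((if k' = k then 1 else 0) - (if k' = l then 1 else 0))) B y
     = (\<Sum>k'<K. \<nu> k' * ?F k') + t * ((\<Sum>k'<K. (if k' = k then 1 else 0) * ?F k') - (\<Sum>k'<K. (if k' = l then 1 else 0) * ?F k'))"
    unfolding resp_lik_def
    by (simp add: algebra_simps sum.distrib sum_subtractf sum_distrib_left)
  also have "\<dots> = resp_lik J K \<nu> B y + t * (?F k - ?F l)"
    unfolding d[OF assms(1)] d[OF assms(2)] resp_lik_def ..
  finally show ?thesis .
qed

lemma cprob_nonneg: "0 \<le> b \<Longrightarrow> b \<le> 1 \<Longrightarrow> 0 \<le> cprob b y"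
  by (simp add: cprob_def)

lemma resp_lik_nonneg:
  assumes "param_space J K \<nu> B" shows "0 \<le> resp_lik J K \<nu> B y"
  using assms unfolding resp_lik_def param_space_def
  by (auto intro!: sum_nonneg mult_nonneg_nonneg prod_nonneg cprob_nonneg)

lemma mle_resp_pos:
  assumes mle: "is_MLE N J K \<nu> B Yd" and ps: "param_space J K \<nu>0 B0"
    and pos: "\<forall>i<N. resp_lik J K \<nu>0 B0 (Yd i) > 0" and i: "i < N"
  shows "resp_lik J K \<nu> B (Yd i) > 0"
proof -
  have "likelihood N J K \<nu>0 B0 Yd > 0" unfolding likelihood_def using pos by (auto intro!: prod_pos)
  also have "\<dots> \<le> likelihood N J K \<nu> B Yd" using mle ps unfolding is_MLE_def by auto
  finally have L: "0 < (\<Prod>i<N. resp_lik J K \<nu> B (Yd i))" unfolding likelihood_def .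
  have "resp_lik J K \<nu> B (Yd i) \<noteq> 0"
  proof
    assume "resp_lik J K \<nu> B (Yd i) = 0"
    then have "(\<Prod>i<N. resp_lik J K \<nu> B (Yd i)) = 0" using i by (intro prod_zero) auto
    with L show False by simp
  qed
  moreover have "resp_lik J K \<nu> B (Yd i) \<ge> 0" using mle resp_lik_nonneg unfolding is_MLE_def by blast
  ultimately show ?thesis by linarith
qed

lemma post_weight_sum:
  assumes "resp_lik J K \<nu> B (Yd i) > 0"
  shows "(\<Sum>k<K. post_weight J K \<nu> B Yd i k) = 1"
  using assms unfolding post_weight_def resp_lik_def by (simp add: sum_divide_distrib[symmetric])

lemma mle_beta_fixed:
  assumes mle: "is_MLE N J K \<nu> B Yd" and j: "j < J" and k: "k < K"
    and b: "0 < B j k" "B j k < 1" and R: "\<forall>i<N. resp_lik J K \<nu> B (Yd i) > 0"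
  shows "(\<Sum>i<N. post_weight J K \<nu> B Yd i k * (if Yd i j then 1 else 0))
       = B j k * (\<Sum>i<N. post_weight J K \<nu> B Yd i k)"
proof -
  define Rr where "Rr i = resp_lik J K \<nu> B (Yd i)" for i
  define rest where "rest i = \<nu> k * (\<Prod>j'\<in>{..<J}-{j}. cprob (B j' k) (Yd i j'))" for i
  define s where "s i = (if Yd i j then 1 else -1::real)" for i
  define r where "r = min (B j k) (1 - B j k)"
  have r: "r > 0" using b unfolding r_def by auto
  have le: "\<forall>t. \<bar>t\<bar> < r \<longrightarrow> (\<Prod>i<N. Rr i + t * (rest i * s i)) \<le> (\<Prod>i<N. Rr i)"
  proof (intro allI impI)
    fix t :: real assume t: "\<bar>t\<bar> < r"
    let ?B' = "B(j := (B j)(k := B j k + t))"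
    have ps: "param_space J K \<nu> ?B'"
      using mle t unfolding is_MLE_def param_space_def r_def by auto
    have "likelihood N J K \<nu> ?B' Yd \<le> likelihood N J K \<nu> B Yd" using mle ps unfolding is_MLE_def by auto
    then show "(\<Prod>i<N. Rr i + t * (rest i * s i)) \<le> (\<Prod>i<N. Rr i)"
      unfolding likelihood_def resp_lik_update_B[OF j k] Rr_def rest_def s_def by (simp add: mult.assoc)
  qed
  have Rp: "\<forall>i<N. Rr i > 0" using R unfolding Rr_def by auto
  have z: "(\<Sum>i<N. rest i * s i / Rr i) = 0" by (rule local_max_affine_prod[OF Rp r le])
  have pw: "post_weight J K \<nu> B Yd i k = rest i / Rr i * cprob (B j k) (Yd i j)" for i
  proof -
    have "(\<Prod>j'<J. cprob (B j' k) (Yd i j')) = cprob (B j k) (Yd i j) * (\<Prod>j'\<in>{..<J}-{j}. cprob (B j' k) (Yd i j'))"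
      using prod.remove[of "{..<J}" j "\<lambda>j'. cprob (B j' k) (Yd i j')"] j by simp
    then show ?thesis unfolding post_weight_def rest_def Rr_def by simp
  qed
  have "(\<Sum>i<N. B j k * post_weight J K \<nu> B Yd i k - post_weight J K \<nu> B Yd i k * (if Yd i j then 1 else 0))
      = (\<Sum>i<N. (- (B j k * (1 - B j k))) * (rest i * s i / Rr i))"
    by (intro sum.cong refl) (auto simp: pw s_def cprob_def algebra_simps diff_divide_distrib add_divide_distrib)
  also have "\<dots> = (- (B j k * (1 - B j k))) * (\<Sum>i<N. rest i * s i / Rr i)"
    by (rule sum_distrib_left[symmetric])
  also have "\<dots> = 0" using z by simp
  finally show ?thesis by (simp add: sum_subtractf sum_distrib_left)
qed

lemma mle_nu_fixed:
  assumes mle: "is_MLE N J K \<nu> B Yd" and K: "1 \<le> K"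
    and nu: "\<forall>k<K. 0 < \<nu> k" and R: "\<forall>i<N. resp_lik J K \<nu> B (Yd i) > 0"
  shows "\<forall>k<K. (\<Sum>i<N. post_weight J K \<nu> B Yd i k) = real N * \<nu> k"
proof -
  define Rr where "Rr i = resp_lik J K \<nu> B (Yd i)" for i
  define F where "F i k = (\<Prod>j<J. cprob (B j k) (Yd i j))" for i k
  define lam where "lam k = (\<Sum>i<N. F i k / Rr i)" for k
  have Rp: "\<forall>i<N. Rr i > 0" using R unfolding Rr_def by auto
  have eq: "lam k = lam l" if k: "k < K" and l: "l < K" for k l
  proof (cases "k = l")
    case False
    define r where "r = min (\<nu> k) (\<nu> l)"
    have r: "r > 0" using nu k l unfolding r_def by auto
    have le: "\<forall>t. \<bar>t\<bar> < r \<longrightarrow> (\<Prod>i<N. Rr i + t * (F i k - F i l)) \<le> (\<Prod>i<N. Rr i)"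
    proof (intro allI impI)
      fix t :: real assume t: "\<bar>t\<bar> < r"
      let ?nu = "\<lambda>k'. \<nu> k' + t * ((if k' = k then 1 else 0) - (if k' = l then 1 else 0))"
      have s: "(\<Sum>k'<K. ?nu k') = (\<Sum>k'<K. \<nu> k')"
        using k l False by (simp add: sum.distrib sum_distrib_left[symmetric] sum_subtractf)
      have ps: "param_space J K ?nu B"
        using mle t s unfolding is_MLE_def param_space_def r_def by auto
      have "likelihood N J K ?nu B Yd \<le> likelihood N J K \<nu> B Yd" using mle ps unfolding is_MLE_def by auto
      then show "(\<Prod>i<N. Rr i + t * (F i k - F i l)) \<le> (\<Prod>i<N. Rr i)"
        unfolding likelihood_def resp_lik_update_nu[OF k l] Rr_def F_def by simp
    qed
    have "(\<Sum>i<N. (F i k - F i l) / Rr i) = 0" by (rule local_max_affine_prod[OF Rp r le])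
    then show ?thesis unfolding lam_def by (simp add: diff_divide_distrib sum_subtractf)
  qed simp
  have pw: "post_weight J K \<nu> B Yd i k = \<nu> k * (F i k / Rr i)" for i k
    unfolding post_weight_def F_def Rr_def by simp
  have n: "(\<Sum>i<N. post_weight J K \<nu> B Yd i k) = \<nu> k * lam 0" if "k < K" for k
  proof -
    have "(\<Sum>i<N. post_weight J K \<nu> B Yd i k) = \<nu> k * lam k"
      unfolding pw lam_def by (simp add: sum_distrib_left)
    then show ?thesis using eq[OF that, of 0] K by simp
  qed
  have "real N = (\<Sum>i<N. \<Sum>k<K. post_weight J K \<nu> B Yd i k)"
    using post_weight_sum R by simp
  also have "\<dots> = (\<Sum>k<K. \<nu> k * lam 0)" by (subst sum.swap) (simp add: n)
  also have "\<dots> = lam 0" using mle unfolding is_MLE_def param_space_def by (simp add: sum_distrib_right[symmetric])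
  finally show ?thesis using n by simp
qed

definition phi :: "real \<Rightarrow> real \<Rightarrow> real" where
  "phi p q = p * (ln p - ln q) + (1 - p) * (ln (1 - p) - ln (1 - q))"

lemma ln_ge_half:
  fixes a b :: real assumes "0 < a" "0 < b"
  shows "a * a * (ln (a * a) - ln (b * b)) \<ge> 2 * a * a - 2 * a * b"
proof -
  have "ln (b / a) \<le> b / a - 1" using assms by (intro ln_le_minus_one) auto
  then have "ln b - ln a \<le> b / a - 1" using assms by (simp add: ln_div)
  then have "a * a * (ln b - ln a) \<le> a * a * (b / a - 1)" using assms by (intro mult_left_mono) auto
  also have "\<dots> = a * b - a * a" using assms by (simp add: field_simps)
  finally have *: "a * a * (ln b - ln a) \<le> a * b - a * a" .
  have e: "ln (a * a) = 2 * ln a" "ln (b * b) = 2 * ln b" using assms by (simp_all add: ln_mult)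
  have "a * a * (ln (a * a) - ln (b * b)) = - 2 * (a * a * (ln b - ln a))" unfolding e by (simp add: algebra_simps)
  then show ?thesis using * by linarith
qed

lemma phi_lower:
  assumes p: "0 < p" "p < 1" and q: "0 < q" "q < 1"
  shows "(p - q)^2 / 4 \<le> phi p q"
proof -
  define a where "a = sqrt p"
  define b where "b = sqrt q"
  define c where "c = sqrt (1 - p)"
  define d where "d = sqrt (1 - q)"
  have pos: "0 < a" "0 < b" "0 < c" "0 < d" using p q unfolding a_def b_def c_def d_def by auto
  have sq: "a * a = p" "b * b = q" "c * c = 1 - p" "d * d = 1 - q"
    using p q unfolding a_def b_def c_def d_def by auto
  have le1: "a \<le> 1" "b \<le> 1" using p q unfolding a_def b_def by auto
  have h1: "p * (ln p - ln q) \<ge> 2 * a * a - 2 * a * b" using ln_ge_half[OF pos(1,2)] sq by simp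
  have h2: "(1 - p) * (ln (1 - p) - ln (1 - q)) \<ge> 2 * c * c - 2 * c * d" using ln_ge_half[OF pos(3,4)] sq by simp
  have "phi p q \<ge> (a - b)^2 + (c - d)^2"
    using h1 h2 sq unfolding phi_def by (simp add: power2_eq_square algebra_simps)
  moreover have "(p - q)^2 = (a - b)^2 * (a + b)^2" using sq by (simp add: power2_eq_square algebra_simps)
  moreover have "(a + b)^2 \<le> 4"
  proof -
    have "(a + b) * (a + b) \<le> 2 * 2" using le1 pos by (intro mult_mono) auto
    then show ?thesis by (simp add: power2_eq_square)
  qed
  moreover have "0 \<le> (a - b)^2" "0 \<le> (c - d)^2" by auto
  ultimately have "(p - q)^2 \<le> 4 * (a - b)^2"
    by (metis mult.commute mult_right_mono zero_le_power2)
  with \<open>phi p q \<ge> (a - b)^2 + (c - d)^2\<close> show ?thesis using zero_le_power2[of "c - d"] by linarith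
qed

lemma phi_upper:
  assumes p: "0 < p" "p < 1" and q: "0 < q" "q < 1"
  shows "phi p q \<le> (p - q)^2 / (q * (1 - q))"
proof -
  have l1: "ln p - ln q \<le> p / q - 1"
    using ln_le_minus_one[of "p / q"] p q by (simp add: ln_div)
  have l2: "ln (1 - p) - ln (1 - q) \<le> (1 - p) / (1 - q) - 1"
    using ln_le_minus_one[of "(1 - p) / (1 - q)"] p q by (simp add: ln_div)
  have "phi p q \<le> p * (p / q - 1) + (1 - p) * ((1 - p) / (1 - q) - 1)"
    unfolding phi_def using l1 l2 p by (intro add_mono mult_left_mono) auto
  also have "\<dots> = (p - q)^2 / (q * (1 - q))" using q by (simp add: field_simps power2_eq_square)
  finally show ?thesis .
qed

lemma phi_nonneg: "0 < p \<Longrightarrow> p < 1 \<Longrightarrow> 0 < q \<Longrightarrow> q < 1 \<Longrightarrow> 0 \<le> phi p q"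
  using phi_lower[of p q] by (smt (verit) divide_nonneg_nonneg zero_le_power2)

definition QQ :: "nat \<Rightarrow> (nat \<Rightarrow> real) \<Rightarrow> (nat \<Rightarrow> real) \<Rightarrow> (nat \<Rightarrow> real) \<Rightarrow> real" where
  "QQ K n p \<beta> = (\<Sum>k<K. n k * (p k * ln (\<beta> k) + (1 - p k) * ln (1 - \<beta> k)))"

definition wmean :: "(nat \<Rightarrow> real) \<Rightarrow> (nat \<Rightarrow> real) \<Rightarrow> nat set \<Rightarrow> real" where
  "wmean n p C = (\<Sum>k\<in>C. n k * p k) / (\<Sum>k\<in>C. n k)"

lemma QQ_diff: "QQ K n p p - QQ K n p \<beta> = (\<Sum>k<K. n k * phi (p k) (\<beta> k))"
  unfolding QQ_def phi_def by (simp add: sum_subtractf[symmetric] algebra_simps)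

lemma QQ_cong: "(\<And>k. k < K \<Longrightarrow> \<beta> k = \<beta>' k) \<Longrightarrow> QQ K n p \<beta> = QQ K n p \<beta>'"
  unfolding QQ_def by (intro sum.cong) auto

lemma wmean_bounds:
  assumes "finite C" "C \<noteq> {}" "\<forall>k\<in>C. 0 < n k \<and> lo \<le> p k \<and> p k \<le> hi"
  shows "lo \<le> wmean n p C \<and> wmean n p C \<le> hi"
proof -
  have S: "0 < (\<Sum>k\<in>C. n k)" using assms by (intro sum_pos) auto
  have "lo * (\<Sum>k\<in>C. n k) \<le> (\<Sum>k\<in>C. n k * p k)"
    unfolding sum_distrib_left using assms by (intro sum_mono) (auto simp: mult.commute)
  moreover have "(\<Sum>k\<in>C. n k * p k) \<le> hi * (\<Sum>k\<in>C. n k)"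
    unfolding sum_distrib_left using assms by (intro sum_mono) (auto simp: mult.commute)
  ultimately show ?thesis unfolding wmean_def using S by (simp add: field_simps)
qed

lemma Qj_link:
  assumes FP: "\<forall>k<K. (\<Sum>i<N. \<Gamma> i k * (if Yd i j then 1 else 0)) = p k * (\<Sum>i<N. \<Gamma> i k)"
  shows "Qj N K \<Gamma> Yd j \<beta> = QQ K (\<lambda>k. \<Sum>i<N. \<Gamma> i k) p \<beta>"
proof -
  have pt: "\<Gamma> i k * (if Yd i j then ln (\<beta> k) else ln (1 - \<beta> k))
     = (\<Gamma> i k * (if Yd i j then 1 else 0)) * ln (\<beta> k) + (\<Gamma> i k - \<Gamma> i k * (if Yd i j then 1 else 0)) * ln (1 - \<beta> k)" for i k
    by auto
  have "Qj N K \<Gamma> Yd j \<beta> = (\<Sum>k<K. \<Sum>i<N. \<Gamma> i k * (if Yd i j then ln (\<beta> k) else ln (1 - \<beta> k)))"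
    unfolding Qj_def by (rule sum.swap)
  also have "\<dots> = (\<Sum>k<K. (\<Sum>i<N. \<Gamma> i k * (if Yd i j then 1 else 0)) * ln (\<beta> k)
        + ((\<Sum>i<N. \<Gamma> i k) - (\<Sum>i<N. \<Gamma> i k * (if Yd i j then 1 else 0))) * ln (1 - \<beta> k))"
    unfolding pt by (intro sum.cong refl) (simp add: sum.distrib sum_distrib_right sum_subtractf left_diff_distrib)
  also have "\<dots> = QQ K (\<lambda>k. \<Sum>i<N. \<Gamma> i k) p \<beta>"
    unfolding QQ_def using FP by (intro sum.cong) (auto simp: algebra_simps)
  finally show ?thesis .
qed

lemma block_mean_link:
  assumes FP: "\<forall>k<K. (\<Sum>i<N. \<Gamma> i k * (if Yd i j then 1 else 0)) = p k * (\<Sum>i<N. \<Gamma> i k)"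
    and C: "C \<subseteq> {..<K}"
  shows "block_mean N \<Gamma> Yd j C = wmean (\<lambda>k. \<Sum>i<N. \<Gamma> i k) p C"
proof -
  have "(\<Sum>i<N. \<Sum>k\<in>C. \<Gamma> i k * (if Yd i j then 1 else 0)) = (\<Sum>k\<in>C. \<Sum>i<N. \<Gamma> i k * (if Yd i j then 1 else 0))"
    by (rule sum.swap)
  also have "\<dots> = (\<Sum>k\<in>C. (\<Sum>i<N. \<Gamma> i k) * p k)" using FP C by (intro sum.cong) auto
  finally have 1: "(\<Sum>i<N. \<Sum>k\<in>C. \<Gamma> i k * (if Yd i j then 1 else 0)) = (\<Sum>k\<in>C. (\<Sum>i<N. \<Gamma> i k) * p k)" .
  have 2: "(\<Sum>i<N. \<Sum>k\<in>C. \<Gamma> i k) = (\<Sum>k\<in>C. \<Sum>i<N. \<Gamma> i k)" by (rule sum.swap)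
  show ?thesis unfolding block_mean_def wmean_def 1 2 ..
qed

definition gp :: "nat \<Rightarrow> nat set list \<Rightarrow> bool" where
  "gp K P \<longleftrightarrow> (\<forall>a<length P. P ! a \<noteq> {}) \<and>
     (\<forall>a<length P. \<forall>b<length P. a \<noteq> b \<longrightarrow> P ! a \<inter> P ! b = {}) \<and> \<Union>(set P) = {..<K}"

definition monoP :: "(nat \<Rightarrow> real) \<Rightarrow> nat set list \<Rightarrow> bool" where
  "monoP v P \<longleftrightarrow> (\<forall>a b. a < b \<longrightarrow> b < length P \<longrightarrow> (\<forall>x\<in>P ! a. \<forall>y\<in>P ! b. v x \<le> v y))"

definition pureP :: "(nat \<Rightarrow> real) \<Rightarrow> nat set list \<Rightarrow> bool" where
  "pureP v P \<longleftrightarrow> (\<forall>a<length P. \<forall>x\<in>P ! a. \<forall>y\<in>P ! a. v x = v y)"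

lemma in_Union_set_nth: "x \<in> \<Union>(set P) \<longleftrightarrow> (\<exists>a<length P. x \<in> P ! a)"
proof
  assume "x \<in> \<Union>(set P)" then obtain X where X: "X \<in> set P" "x \<in> X" by blast
  then obtain a where "a < length P" "P ! a = X" by (auto simp: in_set_conv_nth)
  then show "\<exists>a<length P. x \<in> P ! a" using X by blast
next
  assume "\<exists>a<length P. x \<in> P ! a" then obtain a where "a < length P" "x \<in> P ! a" by blast
  then show "x \<in> \<Union>(set P)" using nth_mem by blast
qed

lemma length_merge_adj: "Suc b < length P \<Longrightarrow> length (merge_adj P b) = length P - 1"
  unfolding merge_adj_def by simp

lemma nth_merge_adj:
  assumes "Suc b < length P" "x < length P - 1"
  shows "merge_adj P b ! x = (if x < b then P ! x else if x = b then P ! b \<union> P ! Suc b else P ! Suc x)"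
proof -
  have lt: "length (take b P) = b" using assms by simp
  show ?thesis
  proof (cases "x < b")
    case True then show ?thesis unfolding merge_adj_def using lt by (simp add: nth_append)
  next
    case False
    show ?thesis
    proof (cases "x = b")
      case True then show ?thesis unfolding merge_adj_def using lt by (simp add: nth_append)
    next
      case F2: False
      then have "merge_adj P b ! x = drop (Suc (Suc b)) P ! (x - Suc b)"
        unfolding merge_adj_def using lt False by (simp add: nth_append)
      also have "\<dots> = P ! Suc x" using assms False F2 by simp
      finally show ?thesis using False F2 by simp
    qed
  qed
qed

lemma mem_merge_adj:
  assumes b: "Suc b < length P" and x: "x < length P - 1"
  shows "z \<in> merge_adj P b ! x \<longleftrightarrow> (\<exists>a<length P. z \<in> P ! a \<and> (if a \<le> b then a else a - 1) = x)"
proof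
  assume z: "z \<in> merge_adj P b ! x"
  show "\<exists>a<length P. z \<in> P ! a \<and> (if a \<le> b then a else a - 1) = x"
  proof (cases "x < b")
    case True then show ?thesis using z b x by (intro exI[of _ x]) (simp add: nth_merge_adj)
  next
    case F: False
    show ?thesis
    proof (cases "x = b")
      case True
      then have "z \<in> P ! b \<or> z \<in> P ! Suc b" using z b x by (simp add: nth_merge_adj)
      then show ?thesis
      proof
        assume "z \<in> P ! b" then show ?thesis using True b by (intro exI[of _ b]) simp
      next
        assume "z \<in> P ! Suc b" then show ?thesis using True b by (intro exI[of _ "Suc b"]) simp
      qed
    next
      case False
      then have "z \<in> P ! Suc x" using z b x F by (simp add: nth_merge_adj)
      then show ?thesis using F False x by (intro exI[of _ "Suc x"]) auto
    qed
  qed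
next
  assume "\<exists>a<length P. z \<in> P ! a \<and> (if a \<le> b then a else a - 1) = x"
  then obtain a where a: "a < length P" "z \<in> P ! a" "(if a \<le> b then a else a - 1) = x" by blast
  show "z \<in> merge_adj P b ! x"
  proof (cases "a \<le> b")
    case True
    then show ?thesis using a b x by (cases "a = b") (auto simp: nth_merge_adj)
  next
    case False
    then have "x = a - 1" using a by simp
    then show ?thesis using a b x False
      by (cases "a = Suc b") (auto simp: nth_merge_adj)
  qed
qed

lemma gp_sub: "gp K P \<Longrightarrow> a < length P \<Longrightarrow> P ! a \<subseteq> {..<K}"
  unfolding gp_def using nth_mem[of a P] by blast

lemma gp_merge:
  assumes gp: "gp K P" and b: "Suc b < length P"
  shows "gp K (merge_adj P b)"
proof -
  let ?Q = "merge_adj P b"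
  have len: "length ?Q = length P - 1" using b by (rule length_merge_adj)
  have ne0: "\<And>a. a < length P \<Longrightarrow> P ! a \<noteq> {}" using gp unfolding gp_def by blast
  have ne: "\<forall>a<length ?Q. ?Q ! a \<noteq> {}"
  proof (intro allI impI)
    fix x assume x: "x < length ?Q"
    then have e: "?Q ! x = (if x < b then P ! x else if x = b then P ! b \<union> P ! Suc b else P ! Suc x)"
      using b len by (intro nth_merge_adj) auto
    show "?Q ! x \<noteq> {}"
    proof (cases "x < b")
      case True then show ?thesis using e ne0[of x] x len by simp
    next
      case False
      then show ?thesis using e ne0[of b] ne0[of "Suc x"] x len b by (cases "x = b") auto
    qed
  qed
  have dj: "\<forall>x<length ?Q. \<forall>y<length ?Q. x \<noteq> y \<longrightarrow> ?Q ! x \<inter> ?Q ! y = {}"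
  proof (intro allI impI)
    fix x y assume xy: "x < length ?Q" "y < length ?Q" "x \<noteq> y"
    have D: "\<And>a c z. a < length P \<Longrightarrow> c < length P \<Longrightarrow> z \<in> P ! a \<Longrightarrow> z \<in> P ! c \<Longrightarrow> a = c"
      using gp unfolding gp_def by blast
    show "?Q ! x \<inter> ?Q ! y = {}"
    proof (rule ccontr)
      assume "?Q ! x \<inter> ?Q ! y \<noteq> {}"
      then obtain z where "z \<in> ?Q ! x" "z \<in> ?Q ! y" by blast
      then have "\<exists>a<length P. z \<in> P ! a \<and> (if a \<le> b then a else a - 1) = x"
        "\<exists>a<length P. z \<in> P ! a \<and> (if a \<le> b then a else a - 1) = y"
        using mem_merge_adj[OF b] xy unfolding len by auto
      then obtain a c where "a < length P" "z \<in> P ! a" "(if a \<le> b then a else a - 1) = x"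
        "c < length P" "z \<in> P ! c" "(if c \<le> b then c else c - 1) = y"
        by blast
      then have "a = c" using D by blast
      then show False using xy(3) \<open>(if a \<le> b then a else a - 1) = x\<close> \<open>(if c \<le> b then c else c - 1) = y\<close> by (auto split: if_splits)
    qed
  qed
  have un: "\<Union>(set ?Q) = \<Union>(set P)"
  proof
    show "\<Union>(set ?Q) \<subseteq> \<Union>(set P)"
    proof
      fix x assume "x \<in> \<Union>(set ?Q)"
      then obtain a where a: "a < length ?Q" "x \<in> ?Q ! a" unfolding in_Union_set_nth by blast
      then have "\<exists>a'<length P. x \<in> P ! a' \<and> (if a' \<le> b then a' else a' - 1) = a"
        using mem_merge_adj[OF b, of a x] len by simp
      then show "x \<in> \<Union>(set P)" unfolding in_Union_set_nth by blast
    qed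
    show "\<Union>(set P) \<subseteq> \<Union>(set ?Q)"
    proof
      fix x assume "x \<in> \<Union>(set P)"
      then obtain a where a: "a < length P" "x \<in> P ! a" unfolding in_Union_set_nth by blast
      show "x \<in> \<Union>(set ?Q)" unfolding in_Union_set_nth len
      proof (cases "a < b")
        case True then show "\<exists>a<length P - 1. x \<in> ?Q ! a"
          using a b by (intro exI[of _ a]) (auto simp: nth_merge_adj)
      next
        case False
        show "\<exists>a<length P - 1. x \<in> ?Q ! a"
        proof (cases "a \<le> Suc b")
          case True then show ?thesis using a b False
            by (intro exI[of _ b]) (auto simp: nth_merge_adj le_Suc_eq)
        next
          case F2: False then show ?thesis using a b False
            by (intro exI[of _ "a - 1"]) (auto simp: nth_merge_adj)
        qed
      qed
    qed
  qed
  show ?thesis using gp ne dj un unfolding gp_def by simp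
qed

lemma mono_merge:
  assumes m: "monoP v P" and b: "Suc b < length P"
  shows "monoP v (merge_adj P b)"
proof -
  have M: "\<And>a c x y. a < c \<Longrightarrow> c < length P \<Longrightarrow> x \<in> P ! a \<Longrightarrow> y \<in> P ! c \<Longrightarrow> v x \<le> v y"
    using m unfolding monoP_def by blast
  show ?thesis unfolding monoP_def length_merge_adj[OF b]
  proof (intro allI impI ballI)
    fix x y a c assume ac: "a < c" "c < length P - 1" and x: "x \<in> merge_adj P b ! a" and y: "y \<in> merge_adj P b ! c"
    obtain a' where a': "a' < length P" "x \<in> P ! a'" "(if a' \<le> b then a' else a' - 1) = a"
      using mem_merge_adj[OF b, of a x] x ac by auto
    obtain c' where c': "c' < length P" "y \<in> P ! c'" "(if c' \<le> b then c' else c' - 1) = c"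
      using mem_merge_adj[OF b, of c y] y ac by auto
    have "a' < c'" using a' c' ac by (auto split: if_splits)
    then show "v x \<le> v y" using M a' c' by blast
  qed
qed

lemma pure_merge:
  assumes pu: "pureP v P" and b: "Suc b < length P"
    and u: "\<forall>x\<in>P ! b \<union> P ! Suc b. \<forall>y\<in>P ! b \<union> P ! Suc b. v x = v y"
  shows "pureP v (merge_adj P b)"
  unfolding pureP_def length_merge_adj[OF b]
proof (intro allI impI ballI)
  fix a x y assume a: "a < length P - 1" and x: "x \<in> merge_adj P b ! a" and y: "y \<in> merge_adj P b ! a"
  have e: "merge_adj P b ! a = (if a < b then P ! a else if a = b then P ! b \<union> P ! Suc b else P ! Suc a)"
    by (rule nth_merge_adj[OF b a])
  have PU: "\<And>i x y. i < length P \<Longrightarrow> x \<in> P ! i \<Longrightarrow> y \<in> P ! i \<Longrightarrow> v x = v y"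
    using pu unfolding pureP_def by blast
  show "v x = v y"
  proof (cases "a < b")
    case True
    then have "x \<in> P ! a" "y \<in> P ! a" using x y e by simp_all
    moreover have "a < length P" using True b by simp
    ultimately show ?thesis using PU[of a x y] by blast
  next
    case F: False
    show ?thesis
    proof (cases "a = b")
      case True
      then have "x \<in> P ! b \<union> P ! Suc b" "y \<in> P ! b \<union> P ! Suc b" using x y e by simp_all
      then show ?thesis using u by blast
    next
      case False
      then have "x \<in> P ! Suc a" "y \<in> P ! Suc a" using x y e F by simp_all
      moreover have "Suc a < length P" using a by simp
      ultimately show ?thesis using PU[of "Suc a" x y] by blast
    qed
  qed
qed

lemma block_of_nth:
  assumes gp: "gp K P" and a: "a < length P" and k: "k \<in> P ! a"
  shows "block_of P k = P ! a"
  unfolding block_of_def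
proof (rule the_equality)
  show "P ! a \<in> set P \<and> k \<in> P ! a" using a k by auto
  fix C assume "C \<in> set P \<and> k \<in> C"
  then obtain a' where a': "a' < length P" "C = P ! a'" "k \<in> P ! a'" by (auto simp: in_set_conv_nth)
  have D: "\<forall>a<length P. \<forall>b<length P. a \<noteq> b \<longrightarrow> P ! a \<inter> P ! b = {}"
    using gp unfolding gp_def by (elim conjE)
  have "a' = a"
  proof (rule ccontr)
    assume "a' \<noteq> a"
    then have "P ! a' \<inter> P ! a = {}" using D a'(1) a by blast
    then show False using a'(3) k by blast
  qed
  then show "C = P ! a" using a' by simp
qed

lemma gp_block_ex:
  assumes gp: "gp K P" and k: "k < K"
  shows "\<exists>a<length P. k \<in> P ! a"
proof -
  have "\<Union>(set P) = {..<K}" using gp unfolding gp_def by (elim conjE)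
  then have "k \<in> \<Union>(set P)" using k by simp
  then show ?thesis unfolding in_Union_set_nth .
qed

lemma singl_gp:
  assumes dist: "distinct xs" and st: "set xs = {..<K}"
  shows "gp K (map (\<lambda>k. {k}) xs)" "pureP v (map (\<lambda>k. {k}) xs)"
proof -
  show "pureP v (map (\<lambda>k. {k}) xs)" unfolding pureP_def by auto
  have ne: "\<forall>a<length (map (\<lambda>k. {k}) xs). map (\<lambda>k. {k}) xs ! a \<noteq> {}" by auto
  have dj: "\<forall>a<length (map (\<lambda>k. {k}) xs). \<forall>b<length (map (\<lambda>k. {k}) xs). a \<noteq> b \<longrightarrow>
      map (\<lambda>k. {k}) xs ! a \<inter> map (\<lambda>k. {k}) xs ! b = {}"
    using dist by (auto simp: nth_eq_iff_index_eq)
  have "\<Union>(set (map (\<lambda>k. {k}) xs)) = set xs" by auto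
  then show "gp K (map (\<lambda>k. {k}) xs)" unfolding gp_def using ne dj st by simp
qed

lemma singl_mono:
  fixes p v :: "nat \<Rightarrow> real"
  assumes s: "sorted (map p xs)" and st: "set xs = {..<K}"
    and ord: "\<forall>x<K. \<forall>y<K. p x \<le> p y \<longrightarrow> v x \<le> v y"
  shows "monoP v (map (\<lambda>k. {k}) xs)"
  unfolding monoP_def
proof (intro allI impI ballI)
  fix a b x y assume ab: "a < b" "b < length (map (\<lambda>k. {k}) xs)"
    and x: "x \<in> map (\<lambda>k. {k}) xs ! a" and y: "y \<in> map (\<lambda>k. {k}) xs ! b"
  have xy: "x = xs ! a" "y = xs ! b" using x y ab by auto
  have inK: "xs ! a < K" "xs ! b < K" using ab st nth_mem[of a xs] nth_mem[of b xs] by auto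
  have "map p xs ! a \<le> map p xs ! b"
    using s ab unfolding sorted_iff_nth_mono by simp
  then have "p (xs ! a) \<le> p (xs ! b)" using ab by simp
  then show "v x \<le> v y" using ord inK xy by blast
qed

lemma init_part_props:
  shows "gp K (init_part K p)" "pureP v (init_part K p)" "length (init_part K p) = K"
proof -
  have d: "distinct (sort_key p [0..<K])" by simp
  have st: "set (sort_key p [0..<K]) = {..<K}" by (simp add: atLeast0LessThan)
  show "gp K (init_part K p)" "pureP v (init_part K p)"
    unfolding init_part_def using singl_gp[OF d st] by auto
  show "length (init_part K p) = K" unfolding init_part_def by simp
qed

lemma init_part_mono:
  fixes p v :: "nat \<Rightarrow> real"
  assumes ord: "\<forall>x<K. \<forall>y<K. p x \<le> p y \<longrightarrow> v x \<le> v y"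
  shows "monoP v (init_part K p)"
proof -
  have s: "sorted (map p (sort_key p [0..<K]))" by (rule sorted_sort_key)
  have st: "set (sort_key p [0..<K]) = {..<K}" by (simp add: atLeast0LessThan)
  show ?thesis unfolding init_part_def by (rule singl_mono[OF s st ord])
qed

lemma exists_maximizer:
  fixes f :: "nat \<Rightarrow> real"
  assumes "0 < m"
  shows "\<exists>b<m. \<forall>b'<m. f b' \<le> f b"
proof -
  have fin: "finite (f ` {..<m})" and ne: "f ` {..<m} \<noteq> {}" using assms by auto
  have "Max (f ` {..<m}) \<in> f ` {..<m}" using Max_in[OF fin ne] .
  then obtain b where b: "b < m" "f b = Max (f ` {..<m})" by auto
  have "\<forall>b'<m. f b' \<le> f b" using b Max_ge[OF fin] by auto
  then show ?thesis using b by blast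
qed

lemma best_merge_spec:
  assumes "2 \<le> length P"
  shows "best_merge N K \<Gamma> Yd j P < length P - 1 \<and>
    (\<forall>b'<length P - 1. Qj N K \<Gamma> Yd j (constr_sol N \<Gamma> Yd j (merge_adj P b'))
        \<le> Qj N K \<Gamma> Yd j (constr_sol N \<Gamma> Yd j (merge_adj P (best_merge N K \<Gamma> Yd j P))))"
proof -
  have "\<exists>b<length P - 1. \<forall>b'<length P - 1. Qj N K \<Gamma> Yd j (constr_sol N \<Gamma> Yd j (merge_adj P b'))
        \<le> Qj N K \<Gamma> Yd j (constr_sol N \<Gamma> Yd j (merge_adj P b))"
    using assms by (intro exists_maximizer) auto
  then show ?thesis unfolding best_merge_def by (rule LeastI_ex)
qed

definition rep :: "nat set list \<Rightarrow> nat \<Rightarrow> nat" where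
  "rep P i = (SOME x. x \<in> P ! i)"

lemma rep_in: "gp K P \<Longrightarrow> i < length P \<Longrightarrow> rep P i \<in> P ! i"
  unfolding rep_def gp_def by (meson ex_in_conv someI_ex)

lemma rep_val: "gp K P \<Longrightarrow> pureP v P \<Longrightarrow> i < length P \<Longrightarrow> x \<in> P ! i \<Longrightarrow> v x = v (rep P i)"
  using rep_in unfolding pureP_def by blast

lemma vals_sub:
  assumes gp: "gp K P" and pu: "pureP v P"
  shows "v ` {..<K} \<subseteq> (\<lambda>i. v (rep P i)) ` {..<length P}"
proof
  fix y assume "y \<in> v ` {..<K}"
  then obtain k where k: "k < K" "y = v k" by auto
  obtain i where i: "i < length P" "k \<in> P ! i" using gp_block_ex[OF gp k(1)] by blast
  show "y \<in> (\<lambda>i. v (rep P i)) ` {..<length P}" using rep_val[OF gp pu i] i k by auto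
qed

lemma card_vals_le:
  assumes gp: "gp K P" and pu: "pureP v P"
  shows "card (v ` {..<K}) \<le> length P"
proof -
  have "card (v ` {..<K}) \<le> card ((\<lambda>i. v (rep P i)) ` {..<length P})"
    by (intro card_mono vals_sub[OF gp pu]) auto
  also have "\<dots> \<le> length P" using card_image_le[of "{..<length P}"] by simp
  finally show ?thesis .
qed

lemma pigeon:
  assumes gp: "gp K P" and mo: "monoP v P" and pu: "pureP v P"
    and lt: "card (v ` {..<K}) < length P"
  shows "\<exists>b. Suc b < length P \<and> (\<forall>x\<in>P ! b \<union> P ! Suc b. \<forall>y\<in>P ! b \<union> P ! Suc b. v x = v y)"
proof (rule ccontr)
  assume na: "\<not> ?thesis"
  let ?val = "\<lambda>i. v (rep P i)"
  have step: "?val i < ?val (Suc i)" if "Suc i < length P" for i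
  proof -
    have le: "?val i \<le> ?val (Suc i)"
      using mo rep_in[OF gp, of i] rep_in[OF gp, of "Suc i"] that unfolding monoP_def by auto
    have "?val i \<noteq> ?val (Suc i)"
    proof
      assume eq: "?val i = ?val (Suc i)"
      have "\<forall>x\<in>P ! i \<union> P ! Suc i. \<forall>y\<in>P ! i \<union> P ! Suc i. v x = v y"
        using rep_val[OF gp pu, of i] rep_val[OF gp pu, of "Suc i"] that eq by auto
      then show False using na that by blast
    qed
    then show ?thesis using le by simp
  qed
  have strict: "?val i < ?val i'" if "i < i'" "i' < length P" for i i'
    using that
  proof (induction i')
    case 0 then show ?case by simp
  next
    case (Suc i')
    show ?case
    proof (cases "i = i'")
      case True then show ?thesis using step Suc by simp
    next
      case False
      then have "?val i < ?val i'" using Suc by simp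
      also have "\<dots> < ?val (Suc i')" using step Suc by simp
      finally show ?thesis .
    qed
  qed
  have inj: "inj_on ?val {..<length P}"
  proof (rule inj_onI)
    fix x y assume xy: "x \<in> {..<length P}" "y \<in> {..<length P}" "?val x = ?val y"
    show "x = y"
    proof (rule ccontr)
      assume "x \<noteq> y"
      then have "x < y \<or> y < x" by auto
      then show False using strict xy by (metis lessThan_iff less_irrefl)
    qed
  qed
  have sub: "?val ` {..<length P} \<subseteq> v ` {..<K}"
  proof
    fix y assume "y \<in> ?val ` {..<length P}"
    then obtain i where i: "i < length P" "y = ?val i" by auto
    have "rep P i \<in> {..<K}" using rep_in[OF gp i(1)] gp_sub[OF gp i(1)] by blast
    then show "y \<in> v ` {..<K}" using i by auto
  qed
  have "length P \<le> card (v ` {..<K})"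
    using card_inj_on_le[OF inj sub] by simp
  then show False using lt by simp
qed

lemma exact_same_block:
  assumes gp: "gp K P" and pu: "pureP v P" and len: "length P = card (v ` {..<K})"
    and g: "g < K" and h: "h < K" and eq: "v g = v h"
  shows "block_of P g = block_of P h"
proof -
  obtain a where a: "a < length P" "g \<in> P ! a" using gp_block_ex[OF gp g] by blast
  obtain b where b: "b < length P" "h \<in> P ! b" using gp_block_ex[OF gp h] by blast
  let ?val = "\<lambda>i. v (rep P i)"
  have ab: "a = b"
  proof (rule ccontr)
    assume ne: "a \<noteq> b"
    have va: "?val a = ?val b" using rep_val[OF gp pu a(1) a(2)] rep_val[OF gp pu b(1) b(2)] eq by simp
    have "?val ` {..<length P} = ?val ` ({..<length P} - {a})"
    proof
      show "?val ` {..<length P} \<subseteq> ?val ` ({..<length P} - {a})"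
      proof
        fix y assume "y \<in> ?val ` {..<length P}"
        then obtain i where i: "i < length P" "y = ?val i" by auto
        show "y \<in> ?val ` ({..<length P} - {a})"
        proof (cases "i = a")
          case True then show ?thesis using i va b ne by auto
        next
          case False then show ?thesis using i by auto
        qed
      qed
    qed auto
    then have "card (?val ` {..<length P}) \<le> card ({..<length P} - {a})"
      by (metis card_image_le finite_Diff finite_lessThan)
    also have "\<dots> = length P - 1" using a by simp
    finally have "card (?val ` {..<length P}) \<le> length P - 1" .
    moreover have "card (v ` {..<K}) \<le> card (?val ` {..<length P})"
      by (intro card_mono vals_sub[OF gp pu]) auto
    ultimately show False using len a by linarith
  qed
  show ?thesis using block_of_nth[OF gp a] block_of_nth[OF gp b] ab by simp
qed

lemma sq_ineq: fixes x y q :: real shows "(x - y)^2 \<le> 2 * ((x - q)^2 + (y - q)^2)"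
proof -
  have "2 * ((x - q)^2 + (y - q)^2) - (x - y)^2 = (x + y - 2 * q)^2" by (simp add: power2_eq_square algebra_simps)
  moreover have "0 \<le> (x + y - 2 * q)^2" by simp
  ultimately show ?thesis by linarith
qed

locale core =
  fixes K N :: nat and n p v :: "nat \<Rightarrow> real" and c \<eta> \<delta> a \<rho> :: real
    and \<Gamma> :: "nat \<Rightarrow> nat \<Rightarrow> real" and Yd :: "nat \<Rightarrow> nat \<Rightarrow> bool" and j :: nat
  assumes K1: "1 \<le> K" and Npos: "0 < N"
    and cpos: "0 < c" and nlow: "\<forall>k<K. c * real N \<le> n k"
    and nsum: "(\<Sum>k<K. n k) = real N"
    and close: "\<forall>k<K. \<bar>p k - v k\<bar> \<le> \<eta>"
    and vr: "\<forall>k<K. a \<le> v k \<and> v k \<le> 1 - a"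
    and apos: "0 < a" and ahalf: "a \<le> 1/2"
    and eta0: "0 \<le> \<eta>" and eta1: "\<eta> \<le> a / 2" and eta2: "4 * \<eta> < \<delta>"
    and gap: "\<forall>k<K. \<forall>l<K. v k \<noteq> v l \<longrightarrow> \<delta> \<le> \<bar>v k - v l\<bar>"
    and Qlink: "\<forall>\<beta>. Qj N K \<Gamma> Yd j \<beta> = QQ K n p \<beta>"
    and Blink: "\<forall>C. C \<subseteq> {..<K} \<longrightarrow> block_mean N \<Gamma> Yd j C = wmean n p C"
    and rho: "1 \<le> \<rho>"
    and sel1: "2 * (real N * 16 * \<eta>^2 / a) < ln (real N)"
    and sel2: "real K * (ln (real N) + 2 * ln \<rho>) < 2 * (c * real N * \<delta>^2 / 32 - real N * 16 * \<eta>^2 / a)"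
begin

definition "UU = real N * 16 * \<eta>^2 / a"
definition "LL = c * real N * \<delta>^2 / 32"
definition "ms = card (v ` {..<K})"
definition "cons P k = wmean n p (block_of P k)"
definition "D P = QQ K n p p - QQ K n p (cons P)"

lemma npos: "k < K \<Longrightarrow> 0 < n k"
  using nlow cpos Npos by (smt (verit) mult_pos_pos of_nat_0_less_iff)

lemma p_range: "k < K \<Longrightarrow> a / 2 \<le> p k \<and> p k \<le> 1 - a / 2"
proof -
  assume k: "k < K"
  have "\<bar>p k - v k\<bar> \<le> \<eta>" "a \<le> v k" "v k \<le> 1 - a" using close vr k by auto
  then show ?thesis using eta1 by linarith
qed

lemma p01: "k < K \<Longrightarrow> 0 < p k \<and> p k < 1"
  using p_range apos by (smt (verit) field_sum_of_halves)

lemma cons_block: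
  assumes gp: "gp K P" and k: "k < K"
  obtains i where "i < length P" "k \<in> P ! i" "block_of P k = P ! i" "P ! i \<subseteq> {..<K}"
    "finite (P ! i)" "P ! i \<noteq> {}"
proof -
  obtain i where i: "i < length P" "k \<in> P ! i" using gp_block_ex[OF gp k] by blast
  have sub: "P ! i \<subseteq> {..<K}" by (rule gp_sub[OF gp i(1)])
  then have "finite (P ! i)" using finite_subset by blast
  then show ?thesis using that i block_of_nth[OF gp i] sub by blast
qed

lemma cons_range:
  assumes gp: "gp K P" and k: "k < K"
  shows "a / 2 \<le> cons P k \<and> cons P k \<le> 1 - a / 2"
proof -
  obtain i where i: "i < length P" "k \<in> P ! i" "block_of P k = P ! i" "P ! i \<subseteq> {..<K}"
    "finite (P ! i)" "P ! i \<noteq> {}" using cons_block[OF gp k] by blast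
  have "\<forall>x\<in>P ! i. 0 < n x \<and> a / 2 \<le> p x \<and> p x \<le> 1 - a / 2"
    using i(4) npos p_range by blast
  then show ?thesis unfolding cons_def i(3) using wmean_bounds[OF i(5) i(6)] by blast
qed

lemma cons01: "gp K P \<Longrightarrow> k < K \<Longrightarrow> 0 < cons P k \<and> cons P k < 1"
  using cons_range apos by (smt (verit) field_sum_of_halves)

lemma cons_pure:
  assumes gp: "gp K P" and pu: "pureP v P" and k: "k < K"
  shows "\<bar>cons P k - v k\<bar> \<le> \<eta>"
proof -
  obtain i where i: "i < length P" "k \<in> P ! i" "block_of P k = P ! i" "P ! i \<subseteq> {..<K}"
    "finite (P ! i)" "P ! i \<noteq> {}" using cons_block[OF gp k] by blast
  have "\<forall>x\<in>P ! i. 0 < n x \<and> v k - \<eta> \<le> p x \<and> p x \<le> v k + \<eta>"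
  proof
    fix x assume x: "x \<in> P ! i"
    have "v x = v k" using pu i x unfolding pureP_def by blast
    moreover have "x < K" using x i(4) by auto
    ultimately show "0 < n x \<and> v k - \<eta> \<le> p x \<and> p x \<le> v k + \<eta>"
      using npos close by fastforce
  qed
  then have "v k - \<eta> \<le> cons P k \<and> cons P k \<le> v k + \<eta>"
    unfolding cons_def i(3) using wmean_bounds[OF i(5) i(6)] by blast
  then show ?thesis by linarith
qed

lemma D_eq: "D P = (\<Sum>k<K. n k * phi (p k) (cons P k))"
  unfolding D_def by (rule QQ_diff)

lemma D_nonneg:
  assumes gp: "gp K P" shows "0 \<le> D P"
  unfolding D_eq
  by (intro sum_nonneg mult_nonneg_nonneg) (use npos p01 cons01[OF gp] phi_nonneg in \<open>auto simp: less_imp_le\<close>)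

lemma D_pure:
  assumes gp: "gp K P" and pu: "pureP v P"
  shows "D P \<le> UU"
proof -
  have t: "n k * phi (p k) (cons P k) \<le> n k * (16 * \<eta>^2 / a)" if k: "k < K" for k
  proof -
    let ?q = "cons P k"
    have q: "0 < ?q" "?q < 1" "a / 2 \<le> ?q" "?q \<le> 1 - a / 2" using cons01[OF gp k] cons_range[OF gp k] by auto
    have pq: "\<bar>p k - ?q\<bar> \<le> 2 * \<eta>" using cons_pure[OF gp pu k] close k by fastforce
    have sq: "(p k - ?q)^2 \<le> 4 * \<eta>^2"
    proof -
      have "(p k - ?q)^2 = \<bar>p k - ?q\<bar>^2" by simp
      also have "\<dots> \<le> (2 * \<eta>)^2" using pq by (intro power_mono) auto
      finally show ?thesis by (simp add: power2_eq_square)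
    qed
    have den: "a / 4 \<le> ?q * (1 - ?q)"
    proof -
      have "a / 2 * (1 / 2) \<le> ?q * (1 - ?q)"
      proof (cases "?q \<le> 1/2")
        case True
        then show ?thesis using q by (intro mult_mono) auto
      next
        case False
        then have "(1 / 2) * (a / 2) \<le> ?q * (1 - ?q)" using q apos by (intro mult_mono) auto
        then show ?thesis by simp
      qed
      then show ?thesis by simp
    qed
    have "phi (p k) ?q \<le> (p k - ?q)^2 / (?q * (1 - ?q))" using phi_upper p01[OF k] q by blast
    also have "\<dots> \<le> (4 * \<eta>^2) / (a / 4)"
      using sq den apos q by (intro frac_le) auto
    also have "\<dots> = 16 * \<eta>^2 / a" by simp
    finally show ?thesis using npos[OF k] by (intro mult_left_mono) auto
  qed
  have "D P \<le> (\<Sum>k<K. n k * (16 * \<eta>^2 / a))" unfolding D_eq using t by (intro sum_mono) auto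
  also have "\<dots> = UU" unfolding UU_def sum_distrib_right[symmetric] nsum by simp
  finally show ?thesis .
qed

lemma D_impure:
  assumes gp: "gp K P" and np: "\<not> pureP v P"
  shows "LL \<le> D P"
proof -
  obtain i x y where i: "i < length P" and x: "x \<in> P ! i" and y: "y \<in> P ! i" and vxy: "v x \<noteq> v y"
    using np unfolding pureP_def by blast
  have sub: "P ! i \<subseteq> {..<K}" by (rule gp_sub[OF gp i])
  have xK: "x < K" and yK: "y < K" using x y sub by auto
  have xy: "x \<noteq> y" using vxy by auto
  have cx: "cons P x = wmean n p (P ! i)" unfolding cons_def using block_of_nth[OF gp i x] by simp
  have cy: "cons P y = wmean n p (P ! i)" unfolding cons_def using block_of_nth[OF gp i y] by simp
  let ?q = "wmean n p (P ! i)"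
  have q: "0 < ?q" "?q < 1" using cons01[OF gp xK] cx by auto
  have terms: "0 \<le> n k * phi (p k) (cons P k)" if "k < K" for k
    using npos[OF that] p01[OF that] cons01[OF gp that] phi_nonneg by (simp add: less_imp_le)
  have "n x * phi (p x) ?q + n y * phi (p y) ?q = (\<Sum>k\<in>{x, y}. n k * phi (p k) (cons P k))"
    using xy cx cy by simp
  also have "\<dots> \<le> (\<Sum>k<K. n k * phi (p k) (cons P k))"
    using xK yK terms by (intro sum_mono2) auto
  finally have le: "n x * phi (p x) ?q + n y * phi (p y) ?q \<le> D P" unfolding D_eq .
  have px: "c * real N * ((p x - ?q)^2 / 4) \<le> n x * phi (p x) ?q"
    using nlow xK phi_lower[of "p x" ?q] p01[OF xK] q npos[OF xK]
    by (intro mult_mono) (auto intro: order.trans[OF _ phi_lower] simp: less_imp_le)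
  have py: "c * real N * ((p y - ?q)^2 / 4) \<le> n y * phi (p y) ?q"
    using nlow yK phi_lower[of "p y" ?q] p01[OF yK] q npos[OF yK]
    by (intro mult_mono) (auto intro: order.trans[OF _ phi_lower] simp: less_imp_le)
  have dist: "\<delta> / 2 \<le> \<bar>p x - p y\<bar>"
  proof -
    have "\<delta> \<le> \<bar>v x - v y\<bar>" using gap xK yK vxy by blast
    moreover have "\<bar>p x - v x\<bar> \<le> \<eta>" "\<bar>p y - v y\<bar> \<le> \<eta>" using close xK yK by auto
    ultimately show ?thesis using eta2 eta0 by linarith
  qed
  have "(\<delta> / 2)^2 \<le> (p x - p y)^2"
  proof -
    have "(\<delta> / 2)^2 \<le> \<bar>p x - p y\<bar>^2" using dist eta2 eta0 by (intro power_mono) auto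
    then show ?thesis by simp
  qed
  moreover have "(p x - p y)^2 \<le> 2 * ((p x - ?q)^2 + (p y - ?q)^2)"
    by (rule sq_ineq)
  ultimately have s: "\<delta>^2 / 32 \<le> (p x - ?q)^2 / 4 + (p y - ?q)^2 / 4"
    by (simp add: power_divide)
  have "LL = c * real N * (\<delta>^2 / 32)" unfolding LL_def by simp
  also have "\<dots> \<le> c * real N * ((p x - ?q)^2 / 4 + (p y - ?q)^2 / 4)"
    using s cpos by (intro mult_left_mono) auto
  also have "\<dots> = c * real N * ((p x - ?q)^2 / 4) + c * real N * ((p y - ?q)^2 / 4)"
    by (simp add: algebra_simps)
  also have "\<dots> \<le> D P" using px py le by linarith
  finally show ?thesis .
qed

end

context core
begin

lemma ord: "\<forall>x<K. \<forall>y<K. p x \<le> p y \<longrightarrow> v x \<le> v y"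
proof (intro allI impI)
  fix x y assume x: "x < K" and y: "y < K" and le: "p x \<le> p y"
  show "v x \<le> v y"
  proof (rule ccontr)
    assume "\<not> v x \<le> v y"
    then have "v x \<noteq> v y" "v y < v x" by auto
    then have "\<delta> \<le> \<bar>v x - v y\<bar>" using gap x y by blast
    moreover have "\<bar>p x - v x\<bar> \<le> \<eta>" "\<bar>p y - v y\<bar> \<le> \<eta>" using close x y by auto
    ultimately show False using le eta2 eta0 \<open>v y < v x\<close> by linarith
  qed
qed

lemma Qj_cons:
  assumes gp: "gp K P"
  shows "Qj N K \<Gamma> Yd j (constr_sol N \<Gamma> Yd j P) = QQ K n p (cons P)"
proof -
  have "QQ K n p (constr_sol N \<Gamma> Yd j P) = QQ K n p (cons P)"
  proof (rule QQ_cong)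
    fix k assume k: "k < K"
    obtain i where i: "i < length P" "k \<in> P ! i" "block_of P k = P ! i" "P ! i \<subseteq> {..<K}"
      "finite (P ! i)" "P ! i \<noteq> {}" using cons_block[OF gp k] by blast
    show "constr_sol N \<Gamma> Yd j P k = cons P k"
      unfolding constr_sol_def cons_def using Blink i(3,4) by simp
  qed
  then show ?thesis using Qlink by simp
qed

lemma constr_cons:
  assumes gp: "gp K P" and k: "k < K"
  shows "constr_sol N \<Gamma> Yd j P k = cons P k"
proof -
  obtain i where i: "i < length P" "k \<in> P ! i" "block_of P k = P ! i" "P ! i \<subseteq> {..<K}"
    "finite (P ! i)" "P ! i \<noteq> {}" using cons_block[OF gp k] by blast
  show ?thesis unfolding constr_sol_def cons_def using Blink i(3,4) by simp
qed

lemma lam_nonneg: "0 \<le> ln (real N) + 2 * ln \<rho>"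
  using Npos rho by (simp add: ln_ge_zero)

lemma UU_nonneg: "0 \<le> UU"
  unfolding UU_def using apos by simp

lemma UU_LL: "UU < LL"
proof -
  have "0 \<le> real K * (ln (real N) + 2 * ln \<rho>)" using lam_nonneg by simp
  then have "0 < 2 * (LL - UU)" using sel2 unfolding UU_def LL_def by (rule le_less_trans)
  then show ?thesis by simp
qed

lemma ms_range: "1 \<le> ms" "ms \<le> K"
proof -
  have "v ` {..<K} \<noteq> {}" using K1 by (simp add: lessThan_empty_iff)
  then show "1 \<le> ms" unfolding ms_def by (simp add: Suc_le_eq card_gt_0_iff)
  show "ms \<le> K" unfolding ms_def using card_image_le[OF finite_lessThan[of K], of v] by simp
qed

definition "Pn m = (merge_step N K \<Gamma> Yd j ^^ m) (init_part K p)"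

lemma iter:
  "m < K \<Longrightarrow> gp K (Pn m) \<and> monoP v (Pn m) \<and> length (Pn m) = K - m \<and> (m \<le> K - ms \<longrightarrow> pureP v (Pn m))"
proof (induction m)
  case 0
  show ?case unfolding Pn_def by (simp add: init_part_props init_part_mono[OF ord])
next
  case (Suc m)
  then have IH: "gp K (Pn m)" "monoP v (Pn m)" "length (Pn m) = K - m" "m \<le> K - ms \<longrightarrow> pureP v (Pn m)"
    by auto
  let ?P = "Pn m"
  let ?b = "best_merge N K \<Gamma> Yd j ?P"
  have len2: "2 \<le> length ?P" using IH(3) Suc.prems by simp
  have spec: "?b < length ?P - 1"
    "\<forall>b'<length ?P - 1. Qj N K \<Gamma> Yd j (constr_sol N \<Gamma> Yd j (merge_adj ?P b'))
        \<le> Qj N K \<Gamma> Yd j (constr_sol N \<Gamma> Yd j (merge_adj ?P ?b))"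
    using best_merge_spec[OF len2] by auto
  have b: "Suc ?b < length ?P" using spec(1) by simp
  have eq: "Pn (Suc m) = merge_adj ?P ?b" unfolding Pn_def by (simp add: merge_step_def)
  have gp': "gp K (Pn (Suc m))" unfolding eq by (rule gp_merge[OF IH(1) b])
  have mo': "monoP v (Pn (Suc m))" unfolding eq by (rule mono_merge[OF IH(2) b])
  have len': "length (Pn (Suc m)) = K - Suc m" unfolding eq length_merge_adj[OF b] IH(3) by simp
  have pu': "pureP v (Pn (Suc m))" if sm: "Suc m \<le> K - ms"
  proof -
    have pu: "pureP v ?P" using IH(4) sm by simp
    have lt: "card (v ` {..<K}) < length ?P" using sm IH(3) ms_range unfolding ms_def by linarith
    obtain b0 where b0: "Suc b0 < length ?P"
      "\<forall>x\<in>?P ! b0 \<union> ?P ! Suc b0. \<forall>y\<in>?P ! b0 \<union> ?P ! Suc b0. v x = v y"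
      using pigeon[OF IH(1) IH(2) pu lt] by blast
    have gp0: "gp K (merge_adj ?P b0)" by (rule gp_merge[OF IH(1) b0(1)])
    have pu0: "pureP v (merge_adj ?P b0)" by (rule pure_merge[OF pu b0(1) b0(2)])
    have D0: "D (merge_adj ?P b0) \<le> UU" by (rule D_pure[OF gp0 pu0])
    have "Qj N K \<Gamma> Yd j (constr_sol N \<Gamma> Yd j (merge_adj ?P b0))
        \<le> Qj N K \<Gamma> Yd j (constr_sol N \<Gamma> Yd j (merge_adj ?P ?b))"
      using spec(2) b0(1) by simp
    then have "QQ K n p (cons (merge_adj ?P b0)) \<le> QQ K n p (cons (merge_adj ?P ?b))"
      using Qj_cons[OF gp0] Qj_cons[OF gp_merge[OF IH(1) b]] by simp
    then have "D (merge_adj ?P ?b) \<le> D (merge_adj ?P b0)" unfolding D_def by simp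
    then have Db: "D (merge_adj ?P ?b) \<le> UU" using D0 by simp
    show ?thesis
    proof (rule ccontr)
      assume "\<not> pureP v (Pn (Suc m))"
      then have "LL \<le> D (merge_adj ?P ?b)" using D_impure gp' unfolding eq by blast
      then show False using Db UU_LL by simp
    qed
  qed
  show ?case using gp' mo' len' pu' by blast
qed

definition "Dm m = QQ K n p p - Qj N K \<Gamma> Yd j (candidate N K \<Gamma> Yd j p m)"

lemma Dm_K: "Dm K = 0"
  unfolding Dm_def candidate_def using Qlink by simp

lemma cand_lt: "1 \<le> m \<Longrightarrow> m < K \<Longrightarrow> candidate N K \<Gamma> Yd j p m = constr_sol N \<Gamma> Yd j (Pn (K - m))"
  unfolding candidate_def part_m_def Pn_def by simp

lemma Dm_lt:
  assumes "1 \<le> m" "m < K"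
  shows "Dm m = D (Pn (K - m))"
proof -
  have "gp K (Pn (K - m))" using iter[of "K - m"] assms by simp
  then show ?thesis unfolding Dm_def D_def cand_lt[OF assms] using Qj_cons by simp
qed

lemma Dm_hi:
  assumes "1 \<le> m" "m \<le> K" "ms \<le> m"
  shows "0 \<le> Dm m \<and> Dm m \<le> UU"
proof (cases "m = K")
  case True then show ?thesis using Dm_K UU_nonneg by simp
next
  case False
  then have mK: "m < K" using assms by simp
  have it: "gp K (Pn (K - m))" "pureP v (Pn (K - m))" using iter[of "K - m"] assms mK by auto
  show ?thesis unfolding Dm_lt[OF assms(1) mK] using D_nonneg[OF it(1)] D_pure[OF it] by simp
qed

lemma Dm_lo:
  assumes "1 \<le> m" "m < ms"
  shows "LL \<le> Dm m"
proof -
  have mK: "m < K" using assms ms_range by simp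
  have it: "gp K (Pn (K - m))" "length (Pn (K - m)) = m" using iter[of "K - m"] assms mK by auto
  have "\<not> pureP v (Pn (K - m))"
  proof
    assume "pureP v (Pn (K - m))"
    then have "ms \<le> m" using card_vals_le[OF it(1)] it(2) unfolding ms_def by simp
    then show False using assms by simp
  qed
  then show ?thesis unfolding Dm_lt[OF assms(1) mK] using D_impure[OF it(1)] by simp
qed

lemma EBIC_eq:
  "EBIC N K \<Gamma> Yd j p \<rho> m = - 2 * QQ K n p p + 2 * Dm m + real m * (ln (real N) + 2 * ln \<rho>)"
  unfolding EBIC_def Dm_def by (simp add: algebra_simps)

lemma EBIC_strict:
  assumes m: "1 \<le> m" "m \<le> K" "m \<noteq> ms"
  shows "EBIC N K \<Gamma> Yd j p \<rho> ms < EBIC N K \<Gamma> Yd j p \<rho> m"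
proof -
  define lam where "lam = ln (real N) + 2 * ln \<rho>"
  have lam0: "0 \<le> lam" unfolding lam_def by (rule lam_nonneg)
  have hms: "0 \<le> Dm ms" "Dm ms \<le> UU" using Dm_hi ms_range by simp_all
  obtain X where X: "X = (real m - real ms) * lam" by blast
  have diff: "EBIC N K \<Gamma> Yd j p \<rho> m - EBIC N K \<Gamma> Yd j p \<rho> ms
      = 2 * (Dm m - Dm ms) + X"
    unfolding EBIC_eq lam_def X by (simp add: algebra_simps)
  show ?thesis
  proof (cases "ms < m")
    case True
    have hm: "0 \<le> Dm m" using Dm_hi[of m] m True by simp
    have "1 \<le> real m - real ms" using True by simp
    then have "1 * lam \<le> (real m - real ms) * lam" using lam0 by (rule mult_right_mono)
    then have "lam \<le> X" unfolding X by simp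
    moreover have "2 * UU < lam" using sel1 rho unfolding lam_def UU_def by (simp add: ln_ge_zero) (smt (verit) ln_ge_zero)
    ultimately have "0 < 2 * (Dm m - Dm ms) + X" using hm hms
      by smt
    then show ?thesis using diff by simp
  next
    case False
    then have lt: "m < ms" using m by simp
    have hm: "LL \<le> Dm m" using Dm_lo[OF m(1) lt] .
    have "real ms - real m \<le> real K" using ms_range by simp
    then have "(real ms - real m) * lam \<le> real K * lam" using lam0 by (rule mult_right_mono)
    then have "- (real K * lam) \<le> X" unfolding X by (simp add: algebra_simps)
    moreover have "real K * lam < 2 * (LL - UU)" using sel2 unfolding lam_def LL_def UU_def by simp
    ultimately have "0 < 2 * (Dm m - Dm ms) + X" using hm hms by smt
    then show ?thesis using diff by simp
  qed
qed

lemma m_sel_eq: "m_sel N K \<Gamma> Yd j p \<rho> = ms"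
  unfolding m_sel_def
proof (rule Least_equality)
  show "1 \<le> ms \<and> ms \<le> K \<and> (\<forall>m'. 1 \<le> m' \<and> m' \<le> K \<longrightarrow> EBIC N K \<Gamma> Yd j p \<rho> ms \<le> EBIC N K \<Gamma> Yd j p \<rho> m')"
    using ms_range EBIC_strict by (metis order_refl less_imp_le)
  fix y assume y: "1 \<le> y \<and> y \<le> K \<and> (\<forall>m'. 1 \<le> m' \<and> m' \<le> K \<longrightarrow> EBIC N K \<Gamma> Yd j p \<rho> y \<le> EBIC N K \<Gamma> Yd j p \<rho> m')"
  show "ms \<le> y"
  proof (rule ccontr)
    assume "\<not> ms \<le> y"
    then have "y \<noteq> ms" by simp
    then have "EBIC N K \<Gamma> Yd j p \<rho> ms < EBIC N K \<Gamma> Yd j p \<rho> y" using EBIC_strict y by simp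
    moreover have "EBIC N K \<Gamma> Yd j p \<rho> y \<le> EBIC N K \<Gamma> Yd j p \<rho> ms" using y ms_range by simp
    ultimately show False by simp
  qed
qed

lemma final_eq:
  assumes g: "g < K" and h: "h < K" and e: "v g = v h"
  shows "candidate N K \<Gamma> Yd j p ms g = candidate N K \<Gamma> Yd j p ms h"
proof (cases "ms = K")
  case True
  have "inj_on v {..<K}" using True unfolding ms_def by (simp add: inj_on_iff_eq_card)
  then have "g = h" using g h e by (auto dest: inj_onD)
  then show ?thesis by simp
next
  case False
  then have lt: "ms < K" using ms_range by simp
  have it: "gp K (Pn (K - ms))" "pureP v (Pn (K - ms))" "length (Pn (K - ms)) = ms"
    using iter[of "K - ms"] ms_range lt by auto
  have "block_of (Pn (K - ms)) g = block_of (Pn (K - ms)) h"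
    using exact_same_block[OF it(1) it(2) _ g h e] it(3) unfolding ms_def by simp
  then show ?thesis unfolding cand_lt[OF ms_range(1) lt] constr_sol_def by simp
qed

lemma final_ne:
  assumes g: "g < K" and h: "h < K" and e: "v g \<noteq> v h"
  shows "candidate N K \<Gamma> Yd j p ms g \<noteq> candidate N K \<Gamma> Yd j p ms h"
proof -
  have gap': "\<delta> \<le> \<bar>v g - v h\<bar>" using gap g h e by blast
  show ?thesis
  proof (cases "ms = K")
    case True
    have "\<bar>p g - v g\<bar> \<le> \<eta>" "\<bar>p h - v h\<bar> \<le> \<eta>" using close g h by auto
    then have "p g \<noteq> p h" using gap' eta2 eta0 by linarith
    then show ?thesis using True unfolding candidate_def by simp
  next
    case False
    then have lt: "ms < K" using ms_range by simp
    have it: "gp K (Pn (K - ms))" "pureP v (Pn (K - ms))"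
      using iter[of "K - ms"] ms_range lt by auto
    have "\<bar>cons (Pn (K - ms)) g - v g\<bar> \<le> \<eta>" "\<bar>cons (Pn (K - ms)) h - v h\<bar> \<le> \<eta>"
      using cons_pure[OF it g] cons_pure[OF it h] by auto
    then have "cons (Pn (K - ms)) g \<noteq> cons (Pn (K - ms)) h" using gap' eta2 eta0 by linarith
    then show ?thesis unfolding cand_lt[OF ms_range(1) lt] using constr_cons[OF it(1) g] constr_cons[OF it(1) h] by simp
  qed
qed

end

lemma det0:
  fixes J K N j :: nat and \<rho> \<eta> numin a0 \<delta>0 :: real and \<nu>s :: "nat \<Rightarrow> real" and Bs :: "nat \<Rightarrow> nat \<Rightarrow> real"
    and \<nu>h :: "nat \<Rightarrow> real" and Bh :: "nat \<Rightarrow> nat \<Rightarrow> real" and Yd :: "nat \<Rightarrow> nat \<Rightarrow> bool"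
  assumes K: "1 \<le> K" and nu_sum: "(\<Sum>k<K. \<nu>s k) = 1"
    and A2_nu: "\<forall>k<K. 0 < \<nu>s k" and A2_beta: "\<forall>j<J. \<forall>k<K. 0 < Bs j k \<and> Bs j k < 1"
    and j: "j < J" and rho: "1 \<le> \<rho>"
    and mle: "is_MLE N J K \<nu>h Bh Yd"
    and cn: "\<forall>k<K. \<bar>\<nu>h k - \<nu>s k\<bar> \<le> \<eta>" and cb: "\<forall>k<K. \<bar>Bh j k - Bs j k\<bar> \<le> \<eta>"
    and numin: "0 < numin" "\<forall>k<K. numin \<le> \<nu>s k"
    and a0: "0 < a0" "a0 \<le> 1/2" "\<forall>k<K. a0 \<le> Bs j k \<and> Bs j k \<le> 1 - a0"
    and d0: "\<forall>k<K. \<forall>l<K. Bs j k \<noteq> Bs j l \<longrightarrow> \<delta>0 \<le> \<bar>Bs j k - Bs j l\<bar>"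
    and eta0: "0 \<le> \<eta>" and c1: "\<eta> \<le> numin / 2" and c2: "\<eta> \<le> a0 / 2" and c3: "4 * \<eta> < \<delta>0"
    and c4: "2 * (real N * 16 * \<eta>^2 / a0) < ln (real N)"
    and c5: "real K * (ln (real N) + 2 * ln \<rho>) < 2 * (numin / 2 * real N * \<delta>0^2 / 32 - real N * 16 * \<eta>^2 / a0)"
    and Npos: "0 < N"
  shows "m_tilde N J K \<rho> \<nu>h Bh Yd j = card (Bs j ` {..<K})
    \<and> (\<forall>g<K. \<forall>h<K. Bs j g = Bs j h \<longrightarrow> beta_tilde N J K \<rho> \<nu>h Bh Yd j g = beta_tilde N J K \<rho> \<nu>h Bh Yd j h)
    \<and> (\<forall>g<K. \<forall>h<K. Bs j g \<noteq> Bs j h \<longrightarrow> beta_tilde N J K \<rho> \<nu>h Bh Yd j g \<noteq> beta_tilde N J K \<rho> \<nu>h Bh Yd j h)"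
proof -
  define \<Gamma> where "\<Gamma> = post_weight J K \<nu>h Bh Yd"
  define n where "n k = (\<Sum>i<N. \<Gamma> i k)" for k
  have ps0: "param_space J K \<nu>s Bs" unfolding param_space_def using A2_nu A2_beta nu_sum by (auto simp: less_imp_le)
  have pos0: "\<forall>i<N. resp_lik J K \<nu>s Bs (Yd i) > 0"
  proof (intro allI impI)
    fix i assume "i < N"
    show "resp_lik J K \<nu>s Bs (Yd i) > 0" unfolding resp_lik_def
    proof (rule sum_pos)
      show "finite {..<K}" "{..<K} \<noteq> {}" using K by (auto simp: lessThan_empty_iff)
      fix k assume "k \<in> {..<K}"
      then show "0 < \<nu>s k * (\<Prod>j<J. cprob (Bs j k) (Yd i j))"
        using A2_nu A2_beta by (auto intro!: mult_pos_pos prod_pos simp: cprob_def)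
    qed
  qed
  have R: "\<forall>i<N. resp_lik J K \<nu>h Bh (Yd i) > 0" using mle_resp_pos[OF mle ps0 pos0] by blast
  have nuh: "\<forall>k<K. numin / 2 \<le> \<nu>h k"
  proof (intro allI impI)
    fix k assume k: "k < K"
    have "\<bar>\<nu>h k - \<nu>s k\<bar> \<le> \<eta>" "numin \<le> \<nu>s k" using cn numin k by auto
    then show "numin / 2 \<le> \<nu>h k" using c1 by linarith
  qed
  have nuhpos: "\<forall>k<K. 0 < \<nu>h k" using nuh numin by (smt (verit) half_gt_zero)
  have nfix: "\<forall>k<K. n k = real N * \<nu>h k"
    using mle_nu_fixed[OF mle K nuhpos R] unfolding n_def \<Gamma>_def by simp
  have bh: "\<forall>k<K. a0 / 2 \<le> Bh j k \<and> Bh j k \<le> 1 - a0 / 2"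
  proof (intro allI impI)
    fix k assume k: "k < K"
    have "\<bar>Bh j k - Bs j k\<bar> \<le> \<eta>" "a0 \<le> Bs j k" "Bs j k \<le> 1 - a0" using cb a0 k by auto
    then show "a0 / 2 \<le> Bh j k \<and> Bh j k \<le> 1 - a0 / 2" using c2 by linarith
  qed
  have FP: "\<forall>k<K. (\<Sum>i<N. \<Gamma> i k * (if Yd i j then 1 else 0)) = Bh j k * (\<Sum>i<N. \<Gamma> i k)"
  proof (intro allI impI)
    fix k assume k: "k < K"
    have "0 < Bh j k" "Bh j k < 1" using bh k a0 by (smt (verit) half_gt_zero)+
    then show "(\<Sum>i<N. \<Gamma> i k * (if Yd i j then 1 else 0)) = Bh j k * (\<Sum>i<N. \<Gamma> i k)"
      using mle_beta_fixed[OF mle j k _ _ R] unfolding \<Gamma>_def by simp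
  qed
  have nusum: "(\<Sum>k<K. \<nu>h k) = 1" using mle unfolding is_MLE_def param_space_def by simp
  have I: "core K N n (Bh j) (Bs j) (numin / 2) \<eta> \<delta>0 a0 \<rho> \<Gamma> Yd j"
  proof (unfold_locales)
    show "1 \<le> K" by (rule K)
    show "0 < N" by (rule Npos)
    show "0 < numin / 2" using numin by simp
    show "\<forall>k<K. numin / 2 * real N \<le> n k"
    proof (intro allI impI)
      fix k assume k: "k < K"
      have "numin / 2 * real N \<le> \<nu>h k * real N" using nuh k by (intro mult_right_mono) auto
      then show "numin / 2 * real N \<le> n k" using nfix k by (simp add: mult.commute)
    qed
    show "(\<Sum>k<K. n k) = real N" using nfix nusum by (simp add: sum_distrib_left[symmetric])
    show "\<forall>k<K. \<bar>Bh j k - Bs j k\<bar> \<le> \<eta>" by (rule cb)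
    show "\<forall>k<K. a0 \<le> Bs j k \<and> Bs j k \<le> 1 - a0" using a0 by blast
    show "0 < a0" "a0 \<le> 1/2" using a0 by auto
    show "0 \<le> \<eta>" "\<eta> \<le> a0 / 2" "4 * \<eta> < \<delta>0" by (fact eta0 c2 c3)+
    show "\<forall>k<K. \<forall>l<K. Bs j k \<noteq> Bs j l \<longrightarrow> \<delta>0 \<le> \<bar>Bs j k - Bs j l\<bar>" by (rule d0)
    show "\<forall>\<beta>. Qj N K \<Gamma> Yd j \<beta> = QQ K n (Bh j) \<beta>"
      using Qj_link[where p="Bh j" and N=N and K=K and \<Gamma>=\<Gamma> and Yd=Yd and j=j, OF FP] unfolding n_def by blast
    show "\<forall>C. C \<subseteq> {..<K} \<longrightarrow> block_mean N \<Gamma> Yd j C = wmean n (Bh j) C"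
      using block_mean_link[where p="Bh j" and N=N and K=K and \<Gamma>=\<Gamma> and Yd=Yd and j=j, OF FP] unfolding n_def by blast
    show "1 \<le> \<rho>" by (rule rho)
    show "2 * (real N * 16 * \<eta>^2 / a0) < ln (real N)" by (rule c4)
    show "real K * (ln (real N) + 2 * ln \<rho>) < 2 * (numin / 2 * real N * \<delta>0^2 / 32 - real N * 16 * \<eta>^2 / a0)"
      by (rule c5)
  qed
  have ms: "m_sel N K \<Gamma> Yd j (Bh j) \<rho> = card (Bs j ` {..<K})"
    using core.m_sel_eq[OF I] unfolding core.ms_def[OF I] .
  have mt: "m_tilde N J K \<rho> \<nu>h Bh Yd j = card (Bs j ` {..<K})"
    unfolding m_tilde_def \<Gamma>_def[symmetric] by (rule ms)
  have bt: "beta_tilde N J K \<rho> \<nu>h Bh Yd j = candidate N K \<Gamma> Yd j (Bh j) (core.ms K (Bs j))"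
    unfolding beta_tilde_def \<Gamma>_def[symmetric] mt core.ms_def[OF I] ..
  show ?thesis using mt core.final_eq[OF I] core.final_ne[OF I] unfolding bt by blast
qed

primrec II :: "nat \<Rightarrow> nat set list set" where
  "II 0 = range (\<lambda>xs::nat list. map (\<lambda>k. {k}) xs)"
| "II (Suc m) = (\<lambda>(P, b). merge_adj P b) ` (II m \<times> UNIV)"

lemma countable_II: "countable (II m)"
  by (induction m) auto

lemma measurable_by_countable:
  assumes f: "f \<in> measurable M (count_space UNIV)" and I: "\<forall>x\<in>space M. f x \<in> I" and c: "countable I"
  shows "f \<in> measurable M (count_space I)"
  unfolding measurable_count_space_eq_countable[OF c]
proof
  show "f \<in> space M \<rightarrow> I" using I by auto
  show "\<forall>a\<in>I. f -` {a} \<inter> space M \<in> sets M"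
    using measurable_sets[OF f, of "{_}"] by auto
qed

locale mctx =
  fixes M :: "'a measure" and J K N j :: nat and nuw :: "'a \<Rightarrow> nat \<Rightarrow> real"
    and Bw :: "'a \<Rightarrow> nat \<Rightarrow> nat \<Rightarrow> real" and Y :: "nat \<Rightarrow> nat \<Rightarrow> 'a \<Rightarrow> bool"
  assumes mnu: "\<And>k. (\<lambda>\<omega>. nuw \<omega> k) \<in> borel_measurable M"
    and mB: "\<And>j' k. (\<lambda>\<omega>. Bw \<omega> j' k) \<in> borel_measurable M"
    and mY: "\<And>i j'. j' < J \<Longrightarrow> Measurable.pred M (\<lambda>\<omega>. Y i j' \<omega>)"
    and jJ: "j < J"
begin

definition "G \<omega> = post_weight J K (nuw \<omega>) (Bw \<omega>) (\<lambda>i j'. Y i j' \<omega>)"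

lemma m_cprob: "j' < J \<Longrightarrow> (\<lambda>\<omega>. cprob (Bw \<omega> j' k) (Y i j' \<omega>)) \<in> borel_measurable M"
  unfolding cprob_def
  by (rule measurable_If) (use mB mY in \<open>auto simp: pred_def\<close>)

lemma m_resp: "(\<lambda>\<omega>. resp_lik J K (nuw \<omega>) (Bw \<omega>) (\<lambda>j'. Y i j' \<omega>)) \<in> borel_measurable M"
  unfolding resp_lik_def
  by (intro borel_measurable_sum borel_measurable_times borel_measurable_prod mnu m_cprob) auto

lemma m_G: "(\<lambda>\<omega>. G \<omega> i k) \<in> borel_measurable M"
  unfolding G_def post_weight_def
  by (intro borel_measurable_divide borel_measurable_times borel_measurable_prod mnu m_cprob m_resp) auto

lemma m_Qj:
  assumes "\<And>k. k < K \<Longrightarrow> (\<lambda>\<omega>. \<beta> \<omega> k) \<in> borel_measurable M"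
  shows "(\<lambda>\<omega>. Qj N K (G \<omega>) (\<lambda>i j'. Y i j' \<omega>) j (\<beta> \<omega>)) \<in> borel_measurable M"
  unfolding Qj_def
proof (intro borel_measurable_sum borel_measurable_times m_G)
  fix i k assume "k \<in> {..<K}"
  then have k: "k < K" by simp
  show "(\<lambda>\<omega>. if Y i j \<omega> then ln (\<beta> \<omega> k) else ln (1 - \<beta> \<omega> k)) \<in> borel_measurable M"
    by (rule measurable_If) (use assms[OF k] mY[OF jJ] in \<open>auto simp: pred_def\<close>)
qed

lemma m_bm: "(\<lambda>\<omega>. block_mean N (G \<omega>) (\<lambda>i j'. Y i j' \<omega>) j C) \<in> borel_measurable M"
  unfolding block_mean_def
proof (intro borel_measurable_divide borel_measurable_sum borel_measurable_times m_G)
  fix i k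
  show "(\<lambda>\<omega>. if Y i j \<omega> then 1 else 0 :: real) \<in> borel_measurable M"
    by (rule measurable_If) (use mY[OF jJ] in \<open>auto simp: pred_def\<close>)
qed

lemma m_cs: "(\<lambda>\<omega>. constr_sol N (G \<omega>) (\<lambda>i j'. Y i j' \<omega>) j P k) \<in> borel_measurable M"
  unfolding constr_sol_def by (rule m_bm)

lemma m_Qcs[measurable]:
  "(\<lambda>\<omega>. Qj N K (G \<omega>) (\<lambda>i j'. Y i j' \<omega>) j (constr_sol N (G \<omega>) (\<lambda>i j'. Y i j' \<omega>) j P)) \<in> borel_measurable M"
  by (rule m_Qj) (rule m_cs)

lemma m_best: "(\<lambda>\<omega>. best_merge N K (G \<omega>) (\<lambda>i j'. Y i j' \<omega>) j P) \<in> measurable M (count_space UNIV)"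
  unfolding best_merge_def by measurable

lemma m_insort: "(\<lambda>\<omega>. insort_key (f \<omega>) x ys) \<in> measurable M (count_space UNIV)"
  if mf: "\<And>k. (\<lambda>\<omega>. f \<omega> k :: real) \<in> borel_measurable M" for f :: "'a \<Rightarrow> nat \<Rightarrow> real"
proof (induction ys)
  case Nil then show ?case by simp
next
  case (Cons y ys)
  have "(\<lambda>\<omega>. y # insort_key (f \<omega>) x ys) \<in> measurable M (count_space UNIV)"
    by (rule measurable_compose[OF Cons.IH measurable_count_space])
  moreover have "{\<omega> \<in> space M. f \<omega> x \<le> f \<omega> y} \<in> sets M"
    using mf by measurable
  ultimately show ?case by (simp only: insort_key.simps) (rule measurable_If, simp_all)
qed

lemma m_sort: "(\<lambda>\<omega>. sort_key (f \<omega>) xs) \<in> measurable M (count_space UNIV)"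
  if mf: "\<And>k. (\<lambda>\<omega>. f \<omega> k :: real) \<in> borel_measurable M" for f :: "'a \<Rightarrow> nat \<Rightarrow> real"
proof (induction xs)
  case Nil then show ?case by simp
next
  case (Cons x xs)
  have "(\<lambda>\<omega>. insort_key (f \<omega>) x (sort_key (f \<omega>) xs)) \<in> measurable M (count_space UNIV)"
    by (rule measurable_compose_countable[where f="\<lambda>l \<omega>. insort_key (f \<omega>) x l", OF m_insort[OF mf] Cons.IH])
  then show ?case by simp
qed

definition "Pw m \<omega> = (merge_step N K (G \<omega>) (\<lambda>i j'. Y i j' \<omega>) j ^^ m) (init_part K (Bw \<omega> j))"

lemma m_Pw: "Pw m \<in> measurable M (count_space UNIV) \<and> (\<forall>\<omega>. Pw m \<omega> \<in> II m)"
proof (induction m)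
  case 0
  have "(\<lambda>\<omega>. map (\<lambda>k. {k}) (sort_key (Bw \<omega> j) [0..<K])) \<in> measurable M (count_space UNIV)"
    by (rule measurable_compose[OF m_sort[OF mB] measurable_count_space])
  then show ?case unfolding Pw_def init_part_def by simp
next
  case (Suc m)
  have mI: "Pw m \<in> measurable M (count_space (II m))"
    using measurable_by_countable Suc.IH countable_II by blast
  have F: "(\<lambda>\<omega>. merge_adj P (best_merge N K (G \<omega>) (\<lambda>i j'. Y i j' \<omega>) j P)) \<in> measurable M (count_space UNIV)" for P
    by (rule measurable_compose[OF m_best measurable_count_space])
  have eq: "Pw (Suc m) = (\<lambda>\<omega>. merge_adj (Pw m \<omega>) (best_merge N K (G \<omega>) (\<lambda>i j'. Y i j' \<omega>) j (Pw m \<omega>)))"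
    unfolding Pw_def by (simp add: merge_step_def)
  have "Pw (Suc m) \<in> measurable M (count_space UNIV)"
    unfolding eq by (rule measurable_compose_countable'[OF F mI countable_II])
  moreover have "\<forall>\<omega>. Pw (Suc m) \<omega> \<in> II (Suc m)" unfolding eq using Suc.IH by auto
  ultimately show ?case by blast
qed

lemma m_cand: "(\<lambda>\<omega>. candidate N K (G \<omega>) (\<lambda>i j'. Y i j' \<omega>) j (Bw \<omega> j) m k) \<in> borel_measurable M"
proof (cases "m = K")
  case True then show ?thesis unfolding candidate_def using mB by simp
next
  case False
  have mI: "Pw (K - m) \<in> measurable M (count_space (II (K - m)))"
    using measurable_by_countable m_Pw countable_II by blast
  have "(\<lambda>\<omega>. constr_sol N (G \<omega>) (\<lambda>i j'. Y i j' \<omega>) j (Pw (K - m) \<omega>) k) \<in> borel_measurable M"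
    by (rule measurable_compose_countable'[OF m_cs mI countable_II])
  then show ?thesis using False unfolding candidate_def part_m_def Pw_def by simp
qed

lemma m_EBIC[measurable]: "(\<lambda>\<omega>. EBIC N K (G \<omega>) (\<lambda>i j'. Y i j' \<omega>) j (Bw \<omega> j) \<rho> m) \<in> borel_measurable M"
  unfolding EBIC_def
  by (intro borel_measurable_add borel_measurable_times m_Qj m_cand) auto

lemma m_msel: "(\<lambda>\<omega>. m_sel N K (G \<omega>) (\<lambda>i j'. Y i j' \<omega>) j (Bw \<omega> j) \<rho>) \<in> measurable M (count_space UNIV)"
  unfolding m_sel_def by measurable

lemma m_bt: "(\<lambda>\<omega>. candidate N K (G \<omega>) (\<lambda>i j'. Y i j' \<omega>) j (Bw \<omega> j) (m_sel N K (G \<omega>) (\<lambda>i j'. Y i j' \<omega>) j (Bw \<omega> j) \<rho>) g)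
    \<in> borel_measurable M"
  by (rule measurable_compose_countable[where f="\<lambda>m \<omega>. candidate N K (G \<omega>) (\<lambda>i j'. Y i j' \<omega>) j (Bw \<omega> j) m g", OF m_cand m_msel])

lemma sets_msel: "{\<omega> \<in> space M. m_sel N K (G \<omega>) (\<lambda>i j'. Y i j' \<omega>) j (Bw \<omega> j) \<rho> = c} \<in> sets M"
  using m_msel by measurable

lemma sets_bt_eq: "{\<omega> \<in> space M.
    candidate N K (G \<omega>) (\<lambda>i j'. Y i j' \<omega>) j (Bw \<omega> j) (m_sel N K (G \<omega>) (\<lambda>i j'. Y i j' \<omega>) j (Bw \<omega> j) \<rho>) g
  = candidate N K (G \<omega>) (\<lambda>i j'. Y i j' \<omega>) j (Bw \<omega> j) (m_sel N K (G \<omega>) (\<lambda>i j'. Y i j' \<omega>) j (Bw \<omega> j) \<rho>) h} \<in> sets M"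
  by (rule borel_measurable_eq[OF m_bt m_bt])

lemma sets_bt_ne: "{\<omega> \<in> space M.
    candidate N K (G \<omega>) (\<lambda>i j'. Y i j' \<omega>) j (Bw \<omega> j) (m_sel N K (G \<omega>) (\<lambda>i j'. Y i j' \<omega>) j (Bw \<omega> j) \<rho>) g
  \<noteq> candidate N K (G \<omega>) (\<lambda>i j'. Y i j' \<omega>) j (Bw \<omega> j) (m_sel N K (G \<omega>) (\<lambda>i j'. Y i j' \<omega>) j (Bw \<omega> j) \<rho>) h} \<in> sets M"
proof -
  have "{\<omega> \<in> space M.
    candidate N K (G \<omega>) (\<lambda>i j'. Y i j' \<omega>) j (Bw \<omega> j) (m_sel N K (G \<omega>) (\<lambda>i j'. Y i j' \<omega>) j (Bw \<omega> j) \<rho>) g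
  \<noteq> candidate N K (G \<omega>) (\<lambda>i j'. Y i j' \<omega>) j (Bw \<omega> j) (m_sel N K (G \<omega>) (\<lambda>i j'. Y i j' \<omega>) j (Bw \<omega> j) \<rho>) h}
   = space M - {\<omega> \<in> space M.
    candidate N K (G \<omega>) (\<lambda>i j'. Y i j' \<omega>) j (Bw \<omega> j) (m_sel N K (G \<omega>) (\<lambda>i j'. Y i j' \<omega>) j (Bw \<omega> j) \<rho>) g
  = candidate N K (G \<omega>) (\<lambda>i j'. Y i j' \<omega>) j (Bw \<omega> j) (m_sel N K (G \<omega>) (\<lambda>i j'. Y i j' \<omega>) j (Bw \<omega> j) \<rho>) h}"
    by auto
  then show ?thesis using sets_bt_eq by auto
qed

end

lemma Y_pred:
  fixes M :: "'a measure" and Y :: "nat \<Rightarrow> nat \<Rightarrow> 'a \<Rightarrow> bool" and \<xi> :: "nat \<Rightarrow> 'a \<Rightarrow> nat"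
  assumes P: "prob_space M"
    and indep: "prob_space.indep_vars M (\<lambda>_. count_space UNIV) (\<lambda>i \<omega>. (\<xi> i \<omega>, restrict (\<lambda>j. Y i j \<omega>) {..<J})) UNIV"
    and j': "j' < J"
  shows "Measurable.pred M (\<lambda>\<omega>. Y i j' \<omega>)"
proof -
  have X: "(\<lambda>\<omega>. (\<xi> i \<omega>, restrict (\<lambda>j. Y i j \<omega>) {..<J})) \<in> measurable M (count_space UNIV)"
    using indep unfolding prob_space.indep_vars_def[OF P] by auto
  have "(\<lambda>\<omega>. snd (\<xi> i \<omega>, restrict (\<lambda>j. Y i j \<omega>) {..<J}) j') \<in> measurable M (count_space UNIV)"
    by (rule measurable_compose[OF X measurable_count_space])
  then show ?thesis using j' by simp
qed

lemma conv_one: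
  assumes P: "prob_space M" and S: "\<And>N. S N \<in> sets M"
    and H: "\<And>\<epsilon>. 0 < \<epsilon> \<Longrightarrow> \<exists>E. eventually (\<lambda>N. E N \<subseteq> S N \<and> 1 - \<epsilon> \<le> measure M (E N)) sequentially"
  shows "(\<lambda>N. measure M (S N)) \<longlonglongrightarrow> 1"
proof (rule tendstoI)
  fix r :: real assume r: "0 < r"
  obtain E where E: "eventually (\<lambda>N. E N \<subseteq> S N \<and> 1 - r / 2 \<le> measure M (E N)) sequentially"
    using H[of "r / 2"] r by auto
  show "eventually (\<lambda>N. dist (measure M (S N)) 1 < r) sequentially"
    using E
  proof eventually_elim
    case (elim N)
    have fm: "finite_measure M" using P by (simp add: prob_space_def)
    have "measure M (E N) \<le> measure M (S N)"
      using elim S by (intro finite_measure.finite_measure_mono[OF fm]) auto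
    moreover have "measure M (S N) \<le> 1" using prob_space.prob_le_1[OF P] .
    ultimately show ?case using elim r by (simp add: dist_real_def abs_if)
  qed
qed

lemma good_event:
  fixes X1 X2 :: "nat \<Rightarrow> 'a \<Rightarrow> real"
  assumes P: "prob_space M" and m1: "\<And>N. X1 N \<in> borel_measurable M" and m2: "\<And>N. X2 N \<in> borel_measurable M"
    and b1: "bounded_in_prob M X1" and b2: "bounded_in_prob M X2" and e: "0 < \<epsilon>"
  shows "\<exists>T>0. eventually (\<lambda>N. 1 - \<epsilon> \<le> measure M {\<omega>\<in>space M. \<bar>X1 N \<omega>\<bar> \<le> T \<and> \<bar>X2 N \<omega>\<bar> \<le> T}) sequentially"
proof -
  obtain C1 where C1: "eventually (\<lambda>N. measure M {\<omega>\<in>space M. \<bar>X1 N \<omega>\<bar> > C1} < \<epsilon> / 2) sequentially"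
    using b1 e unfolding bounded_in_prob_def by (meson half_gt_zero)
  obtain C2 where C2: "eventually (\<lambda>N. measure M {\<omega>\<in>space M. \<bar>X2 N \<omega>\<bar> > C2} < \<epsilon> / 2) sequentially"
    using b2 e unfolding bounded_in_prob_def by (meson half_gt_zero)
  define T where "T = max 1 (max C1 C2)"
  have T: "0 < T" "C1 \<le> T" "C2 \<le> T" unfolding T_def by auto
  have "eventually (\<lambda>N. 1 - \<epsilon> \<le> measure M {\<omega>\<in>space M. \<bar>X1 N \<omega>\<bar> \<le> T \<and> \<bar>X2 N \<omega>\<bar> \<le> T}) sequentially"
    using C1 C2
  proof eventually_elim
    case (elim N)
    let ?A1 = "{\<omega>\<in>space M. T < \<bar>X1 N \<omega>\<bar>}"
    let ?A2 = "{\<omega>\<in>space M. T < \<bar>X2 N \<omega>\<bar>}"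
    have s1: "?A1 \<in> sets M" using m1[of N] by measurable
    have s2: "?A2 \<in> sets M" using m2[of N] by measurable
    have s1': "{\<omega>\<in>space M. \<bar>X1 N \<omega>\<bar> > C1} \<in> sets M" using m1[of N] by measurable
    have s2': "{\<omega>\<in>space M. \<bar>X2 N \<omega>\<bar> > C2} \<in> sets M" using m2[of N] by measurable
    have fm: "finite_measure M" using P by (simp add: prob_space_def)
    have "measure M ?A1 \<le> measure M {\<omega>\<in>space M. \<bar>X1 N \<omega>\<bar> > C1}"
      using T by (intro finite_measure.finite_measure_mono[OF fm] s1') auto
    moreover have "measure M ?A2 \<le> measure M {\<omega>\<in>space M. \<bar>X2 N \<omega>\<bar> > C2}"
      using T by (intro finite_measure.finite_measure_mono[OF fm] s2') auto
    moreover have "measure M (?A1 \<union> ?A2) \<le> measure M ?A1 + measure M ?A2" by (rule measure_Un_le[OF s1 s2])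
    ultimately have u: "measure M (?A1 \<union> ?A2) < \<epsilon>" using elim by linarith
    have eq: "{\<omega>\<in>space M. \<bar>X1 N \<omega>\<bar> \<le> T \<and> \<bar>X2 N \<omega>\<bar> \<le> T} = space M - (?A1 \<union> ?A2)" by auto
    have "measure M (space M - (?A1 \<union> ?A2)) = 1 - measure M (?A1 \<union> ?A2)"
      using prob_space.prob_compl[OF P] s1 s2 by blast
    then show ?case unfolding eq using u by simp
  qed
  then show ?thesis using T by blast
qed

lemma ev_conds:
  fixes T numin a0 \<delta>0 \<rho> :: real and K :: nat
  assumes "0 < T" "0 < numin" "0 < a0" "0 < \<delta>0"
  shows "eventually (\<lambda>N. 0 < N \<and> T / sqrt (real N) \<le> numin / 2 \<and> T / sqrt (real N) \<le> a0 / 2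
     \<and> 4 * (T / sqrt (real N)) < \<delta>0 \<and> 32 * T^2 / a0 < ln (real N)
     \<and> real K * (ln (real N) + 2 * ln \<rho>) < 2 * (numin / 2 * real N * \<delta>0^2 / 32 - 16 * T^2 / a0)) sequentially"
proof -
  have tr: "eventually (\<lambda>N. P (real N)) sequentially" if "eventually P (at_top :: real filter)" for P
    using filterlim_real_sequentially that unfolding filterlim_iff by blast
  have e0: "eventually (\<lambda>N::nat. 0 < N) sequentially" by (rule eventually_gt_at_top)
  have e1: "eventually (\<lambda>x::real. T / sqrt x \<le> numin / 2) at_top" using assms by real_asymp
  have e2: "eventually (\<lambda>x::real. T / sqrt x \<le> a0 / 2) at_top" using assms by real_asymp
  have e3: "eventually (\<lambda>x::real. 4 * (T / sqrt x) < \<delta>0) at_top" using assms by real_asymp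
  have e4: "eventually (\<lambda>x::real. 32 * T^2 / a0 < ln x) at_top" using assms by real_asymp
  have e5: "eventually (\<lambda>x::real. real K * (ln x + 2 * ln \<rho>) < 2 * (numin / 2 * x * \<delta>0^2 / 32 - 16 * T^2 / a0)) at_top"
    using assms by real_asymp
  show ?thesis using e0 tr[OF e1] tr[OF e2] tr[OF e3] tr[OF e4] tr[OF e5] by eventually_elim blast
qed

lemma sq_bound:
  fixes x S T :: real
  assumes "sqrt (real N) * sqrt S \<le> T" "0 < N" "x^2 \<le> S"
  shows "\<bar>x\<bar> \<le> T / sqrt (real N)"
proof -
  have "\<bar>x\<bar> = sqrt (x^2)" by simp
  also have "\<dots> \<le> sqrt S" using assms(3) by (rule real_sqrt_le_mono)
  also have "\<dots> \<le> T / sqrt (real N)" using assms(1,2) by (simp add: pos_le_divide_eq mult.commute)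
  finally show ?thesis .
qed

theorem theorem1:
  fixes M :: "'a measure" and J K :: nat and \<rho> :: real
    and \<xi> :: "nat \<Rightarrow> 'a \<Rightarrow> nat" and Y :: "nat \<Rightarrow> nat \<Rightarrow> 'a \<Rightarrow> bool"
    and \<nu>s :: "nat \<Rightarrow> real" and Bs :: "nat \<Rightarrow> nat \<Rightarrow> real"
    and \<nu>h :: "nat \<Rightarrow> 'a \<Rightarrow> nat \<Rightarrow> real" and Bh :: "nat \<Rightarrow> 'a \<Rightarrow> nat \<Rightarrow> nat \<Rightarrow> real"
  assumes P: "prob_space M"
    and K: "1 \<le> K"
    and nu_sum: "(\<Sum>k<K. \<nu>s k) = 1"
    and A2_nu: "\<forall>k<K. 0 < \<nu>s k"
    and A2_beta: "\<forall>j<J. \<forall>k<K. 0 < Bs j k \<and> Bs j k < 1"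
    and indep: "prob_space.indep_vars M (\<lambda>_. count_space UNIV)
                  (\<lambda>i \<omega>. (\<xi> i \<omega>, restrict (\<lambda>j. Y i j \<omega>) {..<J})) UNIV"
    and model: "\<forall>i k y. k < K \<longrightarrow>
                  measure M {\<omega>\<in>space M. \<xi> i \<omega> = k \<and> (\<forall>j<J. Y i j \<omega> = y j)}
                  = \<nu>s k * (\<Prod>j<J. cprob (Bs j k) (y j))"
    and mle: "\<forall>N. \<forall>\<omega>\<in>space M. is_MLE N J K (\<nu>h N \<omega>) (Bh N \<omega>) (\<lambda>i j. Y i j \<omega>)"
    and meas_nu: "\<forall>N k. (\<lambda>\<omega>. \<nu>h N \<omega> k) \<in> borel_measurable M"
    and meas_B: "\<forall>N j k. (\<lambda>\<omega>. Bh N \<omega> j k) \<in> borel_measurable M"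
    and A1_nu: "bounded_in_prob M (\<lambda>N \<omega>. sqrt (real N) * sqrt (\<Sum>k<K. (\<nu>h N \<omega> k - \<nu>s k)\<^sup>2))"
    and A1_B: "bounded_in_prob M
                 (\<lambda>N \<omega>. sqrt (real N) * sqrt (\<Sum>j<J. \<Sum>k<K. (Bh N \<omega> j k - Bs j k)\<^sup>2))"
    and A3: "1 \<le> \<rho>"
  shows "\<forall>j<J.
     (\<lambda>N. measure M {\<omega>\<in>space M.
          m_tilde N J K \<rho> (\<nu>h N \<omega>) (Bh N \<omega>) (\<lambda>i j'. Y i j' \<omega>) j = card (Bs j ` {..<K})})
       \<longlonglongrightarrow> 1
   \<and> (\<forall>g<K. \<forall>h<K. Bs j g = Bs j h \<longrightarrow>
        (\<lambda>N. measure M {\<omega>\<in>space M.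
            beta_tilde N J K \<rho> (\<nu>h N \<omega>) (Bh N \<omega>) (\<lambda>i j'. Y i j' \<omega>) j g
          = beta_tilde N J K \<rho> (\<nu>h N \<omega>) (Bh N \<omega>) (\<lambda>i j'. Y i j' \<omega>) j h}) \<longlonglongrightarrow> 1)
   \<and> (\<forall>g<K. \<forall>h<K. Bs j g \<noteq> Bs j h \<longrightarrow>
        (\<lambda>N. measure M {\<omega>\<in>space M.
            beta_tilde N J K \<rho> (\<nu>h N \<omega>) (Bh N \<omega>) (\<lambda>i j'. Y i j' \<omega>) j g
          \<noteq> beta_tilde N J K \<rho> (\<nu>h N \<omega>) (Bh N \<omega>) (\<lambda>i j'. Y i j' \<omega>) j h}) \<longlonglongrightarrow> 1)"
proof (intro allI impI)
  fix j assume j: "j < J"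
  define X1 where "X1 = (\<lambda>N \<omega>. sqrt (real N) * sqrt (\<Sum>k<K. (\<nu>h N \<omega> k - \<nu>s k)\<^sup>2))"
  define X2 where "X2 = (\<lambda>N \<omega>. sqrt (real N) * sqrt (\<Sum>j<J. \<Sum>k<K. (Bh N \<omega> j k - Bs j k)\<^sup>2))"
  have mnu: "\<And>N k. (\<lambda>\<omega>. \<nu>h N \<omega> k) \<in> borel_measurable M" using meas_nu by blast
  have mB: "\<And>N j k. (\<lambda>\<omega>. Bh N \<omega> j k) \<in> borel_measurable M" using meas_B by blast
  note [measurable] = mnu mB
  have mX1: "\<And>N. X1 N \<in> borel_measurable M" unfolding X1_def by measurable
  have mX2: "\<And>N. X2 N \<in> borel_measurable M" unfolding X2_def by measurable
  have b1: "bounded_in_prob M X1" using A1_nu unfolding X1_def .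
  have b2: "bounded_in_prob M X2" using A1_B unfolding X2_def .
  have mY: "\<And>i j'. j' < J \<Longrightarrow> Measurable.pred M (\<lambda>\<omega>. Y i j' \<omega>)" using Y_pred[OF P indep] by blast
  have MC: "mctx M J j (\<nu>h N) (Bh N) Y" for N
    by unfold_locales (use mnu mB mY j in auto)
  define numin where "numin = Min (\<nu>s ` {..<K})"
  define a0 where "a0 = Min (insert (1/2) ((\<lambda>k. Bs j k) ` {..<K} \<union> (\<lambda>k. 1 - Bs j k) ` {..<K}))"
  define DS where "DS = (\<lambda>(k, l). \<bar>Bs j k - Bs j l\<bar>) ` {(k, l). k < K \<and> l < K \<and> Bs j k \<noteq> Bs j l}"
  define \<delta>0 where "\<delta>0 = Min (insert 1 DS)"
  have Kne: "{..<K} \<noteq> {}" using K by (simp add: lessThan_empty_iff)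
  have numin: "0 < numin" "\<forall>k<K. numin \<le> \<nu>s k"
  proof -
    have "numin \<in> \<nu>s ` {..<K}" unfolding numin_def using Kne by (intro Min_in) auto
    then show "0 < numin" using A2_nu by auto
    show "\<forall>k<K. numin \<le> \<nu>s k" unfolding numin_def by (auto intro: Min_le)
  qed
  have a0: "0 < a0" "a0 \<le> 1/2" "\<forall>k<K. a0 \<le> Bs j k \<and> Bs j k \<le> 1 - a0"
  proof -
    have fin: "finite (insert (1/2) ((\<lambda>k. Bs j k) ` {..<K} \<union> (\<lambda>k. 1 - Bs j k) ` {..<K}))" by auto
    have "a0 \<in> insert (1/2) ((\<lambda>k. Bs j k) ` {..<K} \<union> (\<lambda>k. 1 - Bs j k) ` {..<K})"
      unfolding a0_def using fin by (intro Min_in) auto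
    then show "0 < a0" using A2_beta j by auto
    show "a0 \<le> 1/2" unfolding a0_def using fin by (intro Min_le) auto
    show "\<forall>k<K. a0 \<le> Bs j k \<and> Bs j k \<le> 1 - a0"
    proof (intro allI impI conjI)
      fix k assume k: "k < K"
      show "a0 \<le> Bs j k" unfolding a0_def using fin k by (intro Min_le) auto
      have "a0 \<le> 1 - Bs j k" unfolding a0_def using fin k by (intro Min_le) auto
      then show "Bs j k \<le> 1 - a0" by simp
    qed
  qed
  have finDS: "finite DS"
  proof -
    have "{(k, l). k < K \<and> l < K \<and> Bs j k \<noteq> Bs j l} \<subseteq> {..<K} \<times> {..<K}" by auto
    then have "finite {(k, l). k < K \<and> l < K \<and> Bs j k \<noteq> Bs j l}" by (rule finite_subset) auto
    then show ?thesis unfolding DS_def by simp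
  qed
  have d0: "0 < \<delta>0" "\<forall>k<K. \<forall>l<K. Bs j k \<noteq> Bs j l \<longrightarrow> \<delta>0 \<le> \<bar>Bs j k - Bs j l\<bar>"
  proof -
    have "\<delta>0 \<in> insert 1 DS" unfolding \<delta>0_def using finDS by (intro Min_in) auto
    then show "0 < \<delta>0" unfolding DS_def by auto
    show "\<forall>k<K. \<forall>l<K. Bs j k \<noteq> Bs j l \<longrightarrow> \<delta>0 \<le> \<bar>Bs j k - Bs j l\<bar>"
    proof (intro allI impI)
      fix k l assume "k < K" "l < K" "Bs j k \<noteq> Bs j l"
      then have "\<bar>Bs j k - Bs j l\<bar> \<in> insert 1 DS" unfolding DS_def by force
      then show "\<delta>0 \<le> \<bar>Bs j k - Bs j l\<bar>" unfolding \<delta>0_def using finDS by (intro Min_le) auto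
    qed
  qed
  define CONCL where "CONCL N \<omega> \<longleftrightarrow> m_tilde N J K \<rho> (\<nu>h N \<omega>) (Bh N \<omega>) (\<lambda>i j'. Y i j' \<omega>) j = card (Bs j ` {..<K})
    \<and> (\<forall>g<K. \<forall>h<K. Bs j g = Bs j h \<longrightarrow> beta_tilde N J K \<rho> (\<nu>h N \<omega>) (Bh N \<omega>) (\<lambda>i j'. Y i j' \<omega>) j g = beta_tilde N J K \<rho> (\<nu>h N \<omega>) (Bh N \<omega>) (\<lambda>i j'. Y i j' \<omega>) j h)
    \<and> (\<forall>g<K. \<forall>h<K. Bs j g \<noteq> Bs j h \<longrightarrow> beta_tilde N J K \<rho> (\<nu>h N \<omega>) (Bh N \<omega>) (\<lambda>i j'. Y i j' \<omega>) j g \<noteq> beta_tilde N J K \<rho> (\<nu>h N \<omega>) (Bh N \<omega>) (\<lambda>i j'. Y i j' \<omega>) j h)"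
    for N \<omega>
  have DET: "eventually (\<lambda>N. \<forall>\<omega>\<in>space M. \<bar>X1 N \<omega>\<bar> \<le> T \<and> \<bar>X2 N \<omega>\<bar> \<le> T \<longrightarrow> CONCL N \<omega>) sequentially"
    if T: "0 < T" for T
    using ev_conds[OF T numin(1) a0(1) d0(1), of K \<rho>]
  proof eventually_elim
    case (elim N)
    show ?case
    proof (intro ballI impI)
      fix \<omega> assume \<omega>: "\<omega> \<in> space M" and bd: "\<bar>X1 N \<omega>\<bar> \<le> T \<and> \<bar>X2 N \<omega>\<bar> \<le> T"
      define \<eta> where "\<eta> = T / sqrt (real N)"
      have Np: "0 < N" using elim by simp
      have x1: "X1 N \<omega> \<le> T" "X2 N \<omega> \<le> T" using bd by auto
      have cn: "\<forall>k<K. \<bar>\<nu>h N \<omega> k - \<nu>s k\<bar> \<le> \<eta>"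
      proof (intro allI impI)
        fix k assume k: "k < K"
        have "(\<nu>h N \<omega> k - \<nu>s k)^2 \<le> (\<Sum>k<K. (\<nu>h N \<omega> k - \<nu>s k)\<^sup>2)"
          using k by (intro member_le_sum) auto
        then show "\<bar>\<nu>h N \<omega> k - \<nu>s k\<bar> \<le> \<eta>" unfolding \<eta>_def
          using sq_bound x1(1) Np unfolding X1_def by blast
      qed
      have cb: "\<forall>k<K. \<bar>Bh N \<omega> j k - Bs j k\<bar> \<le> \<eta>"
      proof (intro allI impI)
        fix k assume k: "k < K"
        have "(Bh N \<omega> j k - Bs j k)^2 \<le> (\<Sum>k<K. (Bh N \<omega> j k - Bs j k)\<^sup>2)"
          using k by (intro member_le_sum) auto
        also have "\<dots> \<le> (\<Sum>j<J. \<Sum>k<K. (Bh N \<omega> j k - Bs j k)\<^sup>2)"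
          using j by (intro member_le_sum[where f="\<lambda>j. \<Sum>k<K. (Bh N \<omega> j k - Bs j k)\<^sup>2"] sum_nonneg) auto
        finally show "\<bar>Bh N \<omega> j k - Bs j k\<bar> \<le> \<eta>" unfolding \<eta>_def
          using sq_bound x1(2) Np unfolding X2_def by blast
      qed
      have Neta: "real N * \<eta>^2 = T^2" unfolding \<eta>_def using Np by (simp add: power_divide)
      have c4: "2 * (real N * 16 * \<eta>^2 / a0) < ln (real N)"
      proof -
        have "2 * (real N * 16 * \<eta>^2 / a0) = 32 * (real N * \<eta>^2) / a0" by (simp add: algebra_simps)
        also have "\<dots> = 32 * T^2 / a0" unfolding Neta ..
        finally have e: "2 * (real N * 16 * \<eta>^2 / a0) = 32 * T^2 / a0" .
        have "32 * T^2 / a0 < ln (real N)" using elim by (elim conjE)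
        then show ?thesis unfolding e .
      qed
      have c5: "real K * (ln (real N) + 2 * ln \<rho>) < 2 * (numin / 2 * real N * \<delta>0^2 / 32 - real N * 16 * \<eta>^2 / a0)"
      proof -
        have "real N * 16 * \<eta>^2 / a0 = 16 * (real N * \<eta>^2) / a0" by (simp add: algebra_simps)
        also have "\<dots> = 16 * T^2 / a0" unfolding Neta ..
        finally have e: "real N * 16 * \<eta>^2 / a0 = 16 * T^2 / a0" .
        have "real K * (ln (real N) + 2 * ln \<rho>) < 2 * (numin / 2 * real N * \<delta>0^2 / 32 - 16 * T^2 / a0)"
          using elim by (elim conjE)
        then show ?thesis unfolding e .
      qed
      have eta0: "0 \<le> \<eta>" unfolding \<eta>_def using T by simp
      show "CONCL N \<omega>" unfolding CONCL_def
        by (rule det0[where N=N and J=J and K=K and \<rho>=\<rho> and \<eta>=\<eta> and numin=numin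
              and \<nu>s=\<nu>s and Bs=Bs and \<nu>h="\<nu>h N \<omega>" and Bh="Bh N \<omega>" and Yd="\<lambda>i j'. Y i j' \<omega>" and j=j,
              OF K nu_sum A2_nu A2_beta j A3 _ cn cb numin a0 d0(2) eta0 _ _ _ c4 c5 Np])
           (use mle \<omega> elim in \<open>auto simp: \<eta>_def\<close>)
    qed
  qed
  have H: "\<exists>E. eventually (\<lambda>N. E N \<subseteq> S N \<and> 1 - \<epsilon> \<le> measure M (E N)) sequentially"
    if e: "0 < \<epsilon>" and SS: "\<And>N \<omega>. \<omega> \<in> space M \<Longrightarrow> CONCL N \<omega> \<Longrightarrow> \<omega> \<in> S N" for \<epsilon> S
  proof -
    obtain T where T: "0 < T" and ev: "eventually (\<lambda>N. 1 - \<epsilon> \<le> measure M {\<omega>\<in>space M. \<bar>X1 N \<omega>\<bar> \<le> T \<and> \<bar>X2 N \<omega>\<bar> \<le> T}) sequentially"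
      using good_event[OF P mX1 mX2 b1 b2 e] by blast
    have "eventually (\<lambda>N. {\<omega>\<in>space M. \<bar>X1 N \<omega>\<bar> \<le> T \<and> \<bar>X2 N \<omega>\<bar> \<le> T} \<subseteq> S N
        \<and> 1 - \<epsilon> \<le> measure M {\<omega>\<in>space M. \<bar>X1 N \<omega>\<bar> \<le> T \<and> \<bar>X2 N \<omega>\<bar> \<le> T}) sequentially"
      using ev DET[OF T] by eventually_elim (use SS in blast)
    then show ?thesis by (intro exI[where x="\<lambda>N. {\<omega>\<in>space M. \<bar>X1 N \<omega>\<bar> \<le> T \<and> \<bar>X2 N \<omega>\<bar> \<le> T}"])
  qed
  have G: "mctx.G J K (\<nu>h N) (Bh N) Y \<omega> = post_weight J K (\<nu>h N \<omega>) (Bh N \<omega>) (\<lambda>i j'. Y i j' \<omega>)" for N \<omega>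
    by (rule mctx.G_def[OF MC[of N]])
  have MAIN: "(\<lambda>N. measure M (TT N)) \<longlonglongrightarrow> 1"
    if TS: "\<And>N. TT N \<in> sets M" and TC: "\<And>N \<omega>. \<omega> \<in> space M \<Longrightarrow> CONCL N \<omega> \<Longrightarrow> \<omega> \<in> TT N" for TT
  proof (rule conv_one[OF P])
    show "\<And>N. TT N \<in> sets M" by (rule TS)
    fix \<epsilon> :: real assume "0 < \<epsilon>"
    then show "\<exists>E. eventually (\<lambda>N. E N \<subseteq> TT N \<and> 1 - \<epsilon> \<le> measure M (E N)) sequentially"
      using H TC by blast
  qed
  have S1: "{\<omega>\<in>space M. m_tilde N J K \<rho> (\<nu>h N \<omega>) (Bh N \<omega>) (\<lambda>i j'. Y i j' \<omega>) j = card (Bs j ` {..<K})} \<in> sets M" for N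
    using mctx.sets_msel[OF MC[of N], where K=K and N=N and \<rho>=\<rho> and c="card (Bs j ` {..<K})"] unfolding m_tilde_def G .
  have R1: "(\<lambda>N. measure M {\<omega>\<in>space M.
          m_tilde N J K \<rho> (\<nu>h N \<omega>) (Bh N \<omega>) (\<lambda>i j'. Y i j' \<omega>) j = card (Bs j ` {..<K})}) \<longlonglongrightarrow> 1" (is ?A)
    by (rule MAIN, rule S1) (unfold CONCL_def mem_Collect_eq, blast)
  have R2: "\<forall>g<K. \<forall>h<K. Bs j g = Bs j h \<longrightarrow>
        (\<lambda>N. measure M {\<omega>\<in>space M.
            beta_tilde N J K \<rho> (\<nu>h N \<omega>) (Bh N \<omega>) (\<lambda>i j'. Y i j' \<omega>) j g
          = beta_tilde N J K \<rho> (\<nu>h N \<omega>) (Bh N \<omega>) (\<lambda>i j'. Y i j' \<omega>) j h}) \<longlonglongrightarrow> 1" (is ?B)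
  proof (intro allI impI)
    fix g h assume gh: "g < K" "h < K" "Bs j g = Bs j h"
    have S2: "{\<omega>\<in>space M. beta_tilde N J K \<rho> (\<nu>h N \<omega>) (Bh N \<omega>) (\<lambda>i j'. Y i j' \<omega>) j g
          = beta_tilde N J K \<rho> (\<nu>h N \<omega>) (Bh N \<omega>) (\<lambda>i j'. Y i j' \<omega>) j h} \<in> sets M" for N
      using mctx.sets_bt_eq[OF MC[of N], where K=K and N=N and \<rho>=\<rho> and g=g and h=h] unfolding beta_tilde_def m_tilde_def G .
    show "(\<lambda>N. measure M {\<omega>\<in>space M.
            beta_tilde N J K \<rho> (\<nu>h N \<omega>) (Bh N \<omega>) (\<lambda>i j'. Y i j' \<omega>) j g
          = beta_tilde N J K \<rho> (\<nu>h N \<omega>) (Bh N \<omega>) (\<lambda>i j'. Y i j' \<omega>) j h}) \<longlonglongrightarrow> 1"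
      by (rule MAIN, rule S2) (unfold CONCL_def mem_Collect_eq, use gh in blast)
  qed
  have R3: "\<forall>g<K. \<forall>h<K. Bs j g \<noteq> Bs j h \<longrightarrow>
        (\<lambda>N. measure M {\<omega>\<in>space M.
            beta_tilde N J K \<rho> (\<nu>h N \<omega>) (Bh N \<omega>) (\<lambda>i j'. Y i j' \<omega>) j g
          \<noteq> beta_tilde N J K \<rho> (\<nu>h N \<omega>) (Bh N \<omega>) (\<lambda>i j'. Y i j' \<omega>) j h}) \<longlonglongrightarrow> 1" (is ?C)
  proof (intro allI impI)
    fix g h assume gh: "g < K" "h < K" "Bs j g \<noteq> Bs j h"
    have S3: "{\<omega>\<in>space M. beta_tilde N J K \<rho> (\<nu>h N \<omega>) (Bh N \<omega>) (\<lambda>i j'. Y i j' \<omega>) j g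
          \<noteq> beta_tilde N J K \<rho> (\<nu>h N \<omega>) (Bh N \<omega>) (\<lambda>i j'. Y i j' \<omega>) j h} \<in> sets M" for N
      using mctx.sets_bt_ne[OF MC[of N], where K=K and N=N and \<rho>=\<rho> and g=g and h=h] unfolding beta_tilde_def m_tilde_def G .
    show "(\<lambda>N. measure M {\<omega>\<in>space M.
            beta_tilde N J K \<rho> (\<nu>h N \<omega>) (Bh N \<omega>) (\<lambda>i j'. Y i j' \<omega>) j g
          \<noteq> beta_tilde N J K \<rho> (\<nu>h N \<omega>) (Bh N \<omega>) (\<lambda>i j'. Y i j' \<omega>) j h}) \<longlonglongrightarrow> 1"
      by (rule MAIN, rule S3) (unfold CONCL_def mem_Collect_eq, use gh in blast)
  qed
  show "?A \<and> ?B \<and> ?C" using R1 R2 R3 by blast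
qed

end
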